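(* For any linearizable sketch and any $\lambda>0$, \[ H(\mathbf Y_{[\lambda]})=\sum_{i}\dot H(p_i\lambda)\,\Pr\big(\phi(Y_{0,\lambda},\dots,Y_{i-1,\lambda})=0\big),\qquad \lambda^2 I_{\mathbf Y}(\lambda)=\sum_{i}\dot I(p_i\lambda)\,\Pr\big(\phi(Y_{0,\lambda},\dots,Y_{i-1,\lambda})=0\big), \] the sums ranging over all cell indices $i$.
   Context: Dartboard model: the unit square is partitioned into a finite or countable sequence of cells $c_0,c_1,\dots$ with sizes (areas) $p_i>0$, $\sum_ip_i=1$. Darts arrive according to a Poisson process of rate 1 in time, each landing uniformly; thus at time (cardinality) $\lambda$ the numbers of darts in the cells are independent $\mathrm{Poisson}(p_i\lambda)$ variables. Let $Z_{i,\lambda}$ be the indicator that $c_i$ has been hit by time $\lambda$. A linearizable sketch is given by a function $\phi:\{0,1\}^*\to\{0,1\}$ on finite binary strings that is monotone (coordinatewise $y\le y'$ of equal length implies $\phi(y)\le\phi(y')$), and the cell-occupancy indicators are defined recursively by $Y_{i,\lambda}=Z_{i,\lambda}\vee\phi(Y_{0,\lambda},\dots,Y_{i-1,\lambda})$ (with $\phi$ of the empty string for $i=0$). The state at time $\lambda$ is $\mathbf Y_{[\lambda]}=(Y_{0,\lambda},Y_{1,\lambda},\dots)$; $H(\mathbf Y_{[\lambda]})$ is its Shannon entropy in bits and $I_{\mathbf Y}(\lambda)$ the Fisher information of $\lambda$ with respect to it (standard regularity assumed). $\dot H(t)=\frac{1}{\ln2}\big(te^{-t}-(1-e^{-t})\ln(1-e^{-t})\big)$,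 $\dot I(t)=\frac{t^2}{e^t-1}$. *)

theory Defs
  imports "HOL-Probability.Probability"
begin

definition mono_sketch :: "(bool list \<Rightarrow> bool) \<Rightarrow> bool" where
  "mono_sketch \<phi> \<longleftrightarrow>
     (\<forall>xs ys. length xs = length ys \<longrightarrow> list_all2 (\<le>) xs ys \<longrightarrow> \<phi> xs \<le> \<phi> ys)"

definition dartboard :: "nat set \<Rightarrow> (nat \<Rightarrow> real) \<Rightarrow> bool" where
  "dartboard C p \<longleftrightarrow> ((\<exists>N. C = {..<N}) \<or> C = UNIV) \<and> (\<forall>i\<in>C. 0 < p i) \<and> (p has_sum 1) C"

definition darts :: "nat set \<Rightarrow> (nat \<Rightarrow> real) \<Rightarrow> real \<Rightarrow> (nat \<Rightarrow> nat) measure" where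
  "darts C p lam = PiM C (\<lambda>i. measure_pmf (poisson_pmf (p i * lam)))"

fun Ypre :: "(bool list \<Rightarrow> bool) \<Rightarrow> (nat \<Rightarrow> nat) \<Rightarrow> nat \<Rightarrow> bool list" where
  "Ypre \<phi> z 0 = []"
| "Ypre \<phi> z (Suc n) = Ypre \<phi> z n @ [0 < z n \<or> \<phi> (Ypre \<phi> z n)]"

(* The full state (Y_0, Y_1, ...); indices that are not cells are set to False. *)
definition Ystate :: "nat set \<Rightarrow> (bool list \<Rightarrow> bool) \<Rightarrow> (nat \<Rightarrow> nat) \<Rightarrow> nat \<Rightarrow> bool" where
  "Ystate C \<phi> z i = (i \<in> C \<and> Ypre \<phi> z (Suc i) ! i)"

definition Ypmf :: "nat set \<Rightarrow> (nat \<Rightarrow> real) \<Rightarrow> (bool list \<Rightarrow> bool) \<Rightarrow> real \<Rightarrow> (nat \<Rightarrow> bool) \<Rightarrow> real" where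
  "Ypmf C p \<phi> lam y = measure (darts C p lam) {z \<in> space (darts C p lam). Ystate C \<phi> z = y}"

definition entropyY :: "nat set \<Rightarrow> (nat \<Rightarrow> real) \<Rightarrow> (bool list \<Rightarrow> bool) \<Rightarrow> real \<Rightarrow> ennreal" where
  "entropyY C p \<phi> lam =
     (\<Sum>\<^sub>\<infinity>y \<in> {y. 0 < Ypmf C p \<phi> lam y}. ennreal (- Ypmf C p \<phi> lam y * log 2 (Ypmf C p \<phi> lam y)))"

definition fisherY :: "nat set \<Rightarrow> (nat \<Rightarrow> real) \<Rightarrow> (bool list \<Rightarrow> bool) \<Rightarrow> real \<Rightarrow> ennreal" where
  "fisherY C p \<phi> lam =
     (\<Sum>\<^sub>\<infinity>y \<in> {y. 0 < Ypmf C p \<phi> lam y}.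
        ennreal ((deriv (\<lambda>l. Ypmf C p \<phi> l y) lam)\<^sup>2 / Ypmf C p \<phi> lam y))"

definition prPhi0 :: "nat set \<Rightarrow> (nat \<Rightarrow> real) \<Rightarrow> (bool list \<Rightarrow> bool) \<Rightarrow> real \<Rightarrow> nat \<Rightarrow> real" where
  "prPhi0 C p \<phi> lam i = measure (darts C p lam) {z \<in> space (darts C p lam). \<not> \<phi> (Ypre \<phi> z i)}"

definition Hdot :: "real \<Rightarrow> real" where
  "Hdot t = (t * exp (-t) - (1 - exp (-t)) * ln (1 - exp (-t))) / ln 2"

definition Idot :: "real \<Rightarrow> real" where
  "Idot t = t\<^sup>2 / (exp t - 1)"

end

theory Submission
  imports Defs
begin


lemma Ypre_length[simp]: "length (Ypre \<phi> z n) = n"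
  by (induction n) auto

lemma Ypre_take: "m \<le> n \<Longrightarrow> take m (Ypre \<phi> z n) = Ypre \<phi> z m"
proof (induction n)
  case 0 then show ?case by simp
next
  case (Suc n)
  show ?case
  proof (cases "m = Suc n")
    case True then show ?thesis by simp
  next
    case False then have "m \<le> n" using Suc by simp
    then show ?thesis using Suc by simp
  qed
qed

lemma Ypre_nth: "i < n \<Longrightarrow> Ypre \<phi> z n ! i = (0 < z i \<or> \<phi> (Ypre \<phi> z i))"
proof -
  assume "i < n"
  then have "Ypre \<phi> z (Suc i) = take (Suc i) (Ypre \<phi> z n)" by (simp add: Ypre_take)
  then have "Ypre \<phi> z n ! i = Ypre \<phi> z (Suc i) ! i" using \<open>i<n\<close>
    by (metis lessI nth_take)
  then show ?thesis by (simp add: nth_append)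
qed

lemma Ypre_eq_iff:
  "Ypre \<phi> z n = w \<longleftrightarrow> length w = n \<and> (\<forall>i<n. w ! i = (0 < z i \<or> \<phi> (take i w)))"
proof (induction n arbitrary: w)
  case 0 then show ?case by auto
next
  case (Suc n)
  show ?case
  proof
    assume h: "Ypre \<phi> z (Suc n) = w"
    show "length w = Suc n \<and> (\<forall>i<Suc n. w ! i = (0 < z i \<or> \<phi> (take i w)))"
      using h[symmetric] by (auto simp del: Ypre.simps simp: Ypre_nth Ypre_take)
  next
    assume h: "length w = Suc n \<and> (\<forall>i<Suc n. w ! i = (0 < z i \<or> \<phi> (take i w)))"
    then obtain v b where w: "w = v @ [b]" by (metis length_Suc_conv_rev)
    with h have lv: "length v = n" by simp
    have "\<forall>i<n. v ! i = (0 < z i \<or> \<phi> (take i v))"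
    proof (intro allI impI)
      fix i assume "i < n"
      then show "v ! i = (0 < z i \<or> \<phi> (take i v))"
        using h[THEN conjunct2, rule_format, of i] w lv by (simp add: nth_append)
    qed
    then have "Ypre \<phi> z n = v" using Suc.IH lv by blast
    moreover have "b = (0 < z n \<or> \<phi> v)"
      using h[THEN conjunct2, rule_format, of n] w lv by (simp add: nth_append)
    ultimately show "Ypre \<phi> z (Suc n) = w" using w by simp
  qed
qed



locale dart =
  fixes C :: "nat set" and p :: "nat \<Rightarrow> real" and \<phi> :: "bool list \<Rightarrow> bool"
  assumes db: "dartboard C p"
begin

lemma C_cases: "(\<exists>N. C = {..<N}) \<or> C = UNIV"
  using db unfolding dartboard_def by blast

lemma C_down: "i \<in> C \<Longrightarrow> j \<le> i \<Longrightarrow> j \<in> C"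
  using C_cases by auto

lemma ppos: "i \<in> C \<Longrightarrow> 0 < p i"
  using db unfolding dartboard_def by blast

definition pp :: "nat \<Rightarrow> real" where "pp i = (if i \<in> C then p i else 0)"

lemma pp_nonneg: "0 \<le> pp i"
  using ppos by (auto simp: pp_def less_imp_le)

lemma pp_le: "pp i \<le> p i \<or> i \<notin> C" by (simp add: pp_def)

lemma pp_sums: "pp sums 1"
proof -
  have "(p has_sum 1) C" using db unfolding dartboard_def by blast
  then have "(pp has_sum 1) UNIV"
    by (rule has_sum_cong_neutral[THEN iffD1, rotated -1]) (auto simp: pp_def)
  then show ?thesis by (rule has_sum_imp_sums)
qed

lemma pp_summable: "summable pp" using pp_sums by (simp add: sums_iff)
lemma pp_suminf: "suminf pp = 1" using pp_sums by (simp add: sums_iff)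

lemma pp_lim: "pp \<longlonglongrightarrow> 0" using pp_summable by (rule summable_LIMSEQ_zero)

definition Poi :: "real \<Rightarrow> nat \<Rightarrow> nat measure" where
  "Poi l i = measure_pmf (poisson_pmf (p i * l))"

definition M :: "real \<Rightarrow> (nat \<Rightarrow> nat) measure" where "M l = darts C p l"

lemma M_eq: "M l = PiM C (Poi l)" by (simp add: M_def darts_def Poi_def[abs_def])

lemma prob_M: "prob_space (M l)"
  unfolding M_eq Poi_def by (rule prob_space_PiM) (rule prob_space_measure_pmf)

lemma space_M: "space (M l) = PiE C (\<lambda>_. UNIV)"
  by (simp add: M_eq space_PiM Poi_def)

lemma sets_Poi[simp]: "sets (Poi l i) = UNIV" by (simp add: Poi_def)
lemma space_Poi[simp]: "space (Poi l i) = UNIV" by (simp add: Poi_def)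

definition q :: "real \<Rightarrow> nat \<Rightarrow> real" where "q l i = exp (- (p i * l))"

definition Gf :: "real \<Rightarrow> bool list \<Rightarrow> bool \<Rightarrow> nat \<Rightarrow> real" where
  "Gf l u b i = (if \<phi> u then (if b then 1 else 0) else if b then 1 - q l i else q l i)"

definition Pr :: "real \<Rightarrow> bool list \<Rightarrow> real" where
  "Pr l w = (\<Prod>i<length w. Gf l (take i w) (w ! i) i)"

lemma q_pos: "0 < q l i" by (simp add: q_def)
lemma q_le1: "0 \<le> l \<Longrightarrow> i \<in> C \<Longrightarrow> q l i \<le> 1"
  using ppos[of i] by (simp add: q_def mult_nonneg_nonneg less_imp_le)
lemma q_lt1: "0 < l \<Longrightarrow> i \<in> C \<Longrightarrow> q l i < 1"
  using ppos[of i] by (simp add: q_def)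

lemma Gf_nonneg: "0 \<le> l \<Longrightarrow> i \<in> C \<Longrightarrow> 0 \<le> Gf l u b i"
  using q_le1[of l i] q_pos[of l i] by (auto simp: Gf_def)

lemma Gf_le1: "0 \<le> l \<Longrightarrow> i \<in> C \<Longrightarrow> Gf l u b i \<le> 1"
  using q_le1[of l i] q_pos[of l i] by (auto simp: Gf_def)

lemma Pr_snoc: "Pr l (w @ [b]) = Pr l w * Gf l w b (length w)"
  unfolding Pr_def by (simp add: nth_append)

lemma Pr_Nil[simp]: "Pr l [] = 1" by (simp add: Pr_def)

lemma measure_Poi:
  assumes "0 < l" "i \<in> C"
  shows "measure (Poi l i) {k. (0 < k \<or> \<phi> u) = b} = Gf l u b i"
proof -
  have r: "0 < p i * l" using assms ppos by simp
  interpret P: prob_space "Poi l i" unfolding Poi_def by (rule prob_space_measure_pmf)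
  have m0: "measure (Poi l i) {0} = q l i"
    unfolding Poi_def q_def using r by (simp add: measure_pmf_single)
  have m1: "measure (Poi l i) {k. 0 < k} = 1 - q l i"
  proof -
    have "{k::nat. 0 < k} = space (Poi l i) - {0}" by auto
    then show ?thesis using P.prob_compl[of "{0}"] m0 by simp
  qed
  show ?thesis
  proof (cases "\<phi> u")
    case True then show ?thesis by (cases b) (auto simp: Gf_def P.prob_space[unfolded space_Poi])
  next
    case False
    then show ?thesis
    proof (cases b)
      case True then show ?thesis using False m1 by (simp add: Gf_def)
    next
      case b: False
      have "{k::nat. \<not> 0 < k} = {0}" by auto
      then show ?thesis using False b m0 by (simp add: Gf_def)
    qed
  qed
qed

definition Ok :: "nat \<Rightarrow> bool" where "Ok n \<longleftrightarrow> {..<n} \<subseteq> C"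

lemma Ok_mono: "Ok n \<Longrightarrow> m \<le> n \<Longrightarrow> Ok m" by (auto simp: Ok_def)

lemma Ok_Suc: "i \<in> C \<Longrightarrow> Ok (Suc i)" using C_down by (auto simp: Ok_def)

definition Ev :: "real \<Rightarrow> nat \<Rightarrow> bool list \<Rightarrow> (nat \<Rightarrow> nat) set" where
  "Ev l n w = {z \<in> space (M l). Ypre \<phi> z n = w}"

lemma Ev_emb:
  assumes "Ok n" "length w = n"
  shows "Ev l n w = prod_emb C (Poi l) {..<n} (PiE {..<n} (\<lambda>i. {k. (0 < k \<or> \<phi> (take i w)) = w ! i}))"
  using assms unfolding Ev_def prod_emb_def
  by (auto simp: Ypre_eq_iff M_eq restrict_PiE_iff space_PiM)

lemma Ev_sets: "Ok n \<Longrightarrow> length w = n \<Longrightarrow> Ev l n w \<in> sets (M l)"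
  by (simp add: Ev_emb Ok_def M_eq sets_PiM_I_finite)

lemma emeasure_Ev:
  assumes "0 < l" "Ok n" "length w = n"
  shows "emeasure (M l) (Ev l n w) = ennreal (Pr l w)"
proof -
  have "emeasure (M l) (Ev l n w) = (\<Prod>i<n. emeasure (Poi l i) {k. (0 < k \<or> \<phi> (take i w)) = w ! i})"
    unfolding Ev_emb[OF assms(2,3)] M_eq
    by (rule emeasure_PiM_emb) (use assms in \<open>auto simp: Ok_def Poi_def prob_space_measure_pmf\<close>)
  also have "\<dots> = (\<Prod>i<n. ennreal (Gf l (take i w) (w ! i) i))"
  proof (rule prod.cong[OF refl])
    fix i assume "i \<in> {..<n}"
    then have "i \<in> C" using assms by (auto simp: Ok_def)
    interpret P: prob_space "Poi l i" unfolding Poi_def by (rule prob_space_measure_pmf)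
    show "emeasure (Poi l i) {k. (0 < k \<or> \<phi> (take i w)) = w ! i} = ennreal (Gf l (take i w) (w ! i) i)"
      using measure_Poi[OF assms(1) \<open>i\<in>C\<close>] by (simp add: P.emeasure_eq_measure)
  qed
  also have "\<dots> = ennreal (Pr l w)"
    unfolding Pr_def using assms
    by (subst prod_ennreal) (auto intro!: Gf_nonneg simp: Ok_def)
  finally show ?thesis .
qed

lemma measure_Ev:
  assumes "0 < l" "Ok n" "length w = n"
  shows "measure (M l) (Ev l n w) = Pr l w"
proof -
  have "0 \<le> Pr l w" unfolding Pr_def using assms
    by (auto intro!: prod_nonneg Gf_nonneg simp: Ok_def)
  then show ?thesis using emeasure_Ev[OF assms] by (simp add: measure_def)
qed

lemma Pr_nonneg: "0 \<le> l \<Longrightarrow> Ok (length w) \<Longrightarrow> 0 \<le> Pr l w"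
  unfolding Pr_def by (auto intro!: prod_nonneg Gf_nonneg simp: Ok_def)

lemma Pr_le1: "0 \<le> l \<Longrightarrow> Ok (length w) \<Longrightarrow> Pr l w \<le> 1"
  unfolding Pr_def by (auto intro!: prod_le_1 Gf_nonneg Gf_le1 simp: Ok_def)

end


context dart begin

definition L :: "nat \<Rightarrow> bool list set" where "L n = {w. length w = n}"

lemma finite_L[simp]: "finite (L n)"
proof -
  have "L n = {xs. set xs \<subseteq> (UNIV::bool set) \<and> length xs = n}" by (auto simp: L_def)
  then show ?thesis using finite_lists_length_eq[of "UNIV::bool set" n] by simp
qed

lemma Ypre_in_L[simp]: "Ypre \<phi> z n \<in> L n" by (simp add: L_def)

lemma sum_L_Suc:
  fixes H :: "bool list \<Rightarrow> real"
  shows "(\<Sum>v\<in>L (Suc n). H v) = (\<Sum>w\<in>L n. H (w @ [True]) + H (w @ [False]))"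
proof -
  have eq: "L (Suc n) = (\<lambda>(w,b). w @ [b]) ` (L n \<times> UNIV)"
  proof (rule set_eqI)
    fix v show "v \<in> L (Suc n) \<longleftrightarrow> v \<in> (\<lambda>(w,b). w @ [b]) ` (L n \<times> UNIV)"
    proof
      assume "v \<in> L (Suc n)"
      then have "length v = Suc n" by (simp add: L_def)
      then obtain w b where "v = w @ [b]" "length w = n"
        by (auto simp: length_Suc_conv_rev)
      then show "v \<in> (\<lambda>(w,b). w @ [b]) ` (L n \<times> UNIV)"
      proof (rule_tac image_eqI)
        show "v = (\<lambda>(w,b). w @ [b]) (w,b)" using \<open>v = w @ [b]\<close> by simp
        show "(w,b) \<in> L n \<times> UNIV" using \<open>length w = n\<close> by (simp add: L_def)
      qed
    next
      assume "v \<in> (\<lambda>(w,b). w @ [b]) ` (L n \<times> UNIV)"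
      then obtain w b where "v = w @ [b]" "length w = n" by (auto simp: L_def)
      then show "v \<in> L (Suc n)" by (simp add: L_def)
    qed
  qed
  have inj: "inj_on (\<lambda>(w,b). w @ [b]) (L n \<times> (UNIV::bool set))"
    by (auto simp: inj_on_def)
  have "(\<Sum>v\<in>L (Suc n). H v) = (\<Sum>x\<in>L n \<times> UNIV. H ((\<lambda>(w,b). w @ [b]) x))"
    unfolding eq using sum.reindex[OF inj, of H] by (simp add: comp_def)
  also have "\<dots> = (\<Sum>w\<in>L n. \<Sum>b\<in>UNIV. H (w @ [b]))"
    unfolding sum.cartesian_product by (simp add: case_prod_beta)
  also have "\<dots> = (\<Sum>w\<in>L n. H (w @ [True]) + H (w @ [False]))"
    by (rule sum.cong[OF refl]) (simp add: UNIV_bool)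
  finally show ?thesis .
qed

lemma Ev_disj: "z \<in> Ev l n w \<longleftrightarrow> z \<in> space (M l) \<and> Ypre \<phi> z n = w"
  by (simp add: Ev_def)

lemma prefix_fun_eq:
  fixes F :: "bool list \<Rightarrow> real"
  assumes "z \<in> space (M l)"
  shows "F (Ypre \<phi> z n) = (\<Sum>w\<in>L n. F w * indicator (Ev l n w) z)"
proof -
  have "(\<Sum>w\<in>L n. F w * indicator (Ev l n w) z) = (\<Sum>w\<in>L n. if w = Ypre \<phi> z n then F w else 0)"
    using assms by (intro sum.cong) (auto simp: Ev_def)
  also have "\<dots> = F (Ypre \<phi> z n)" by (simp add: sum.delta')
  finally show ?thesis by simp
qed

lemma integral_prefix:
  fixes F :: "bool list \<Rightarrow> real"
  assumes "0 < l" "Ok n"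
  shows "integrable (M l) (\<lambda>z. F (Ypre \<phi> z n))"
    and "integral\<^sup>L (M l) (\<lambda>z. F (Ypre \<phi> z n)) = (\<Sum>w\<in>L n. F w * Pr l w)"
proof -
  interpret P: prob_space "M l" by (rule prob_M)
  have sets: "w \<in> L n \<Longrightarrow> Ev l n w \<in> sets (M l)" for w
    using Ev_sets[OF assms(2)] by (simp add: L_def)
  have int: "integrable (M l) (\<lambda>z. \<Sum>w\<in>L n. F w * indicator (Ev l n w) z)"
  proof (rule Bochner_Integration.integrable_sum)
    fix w assume w: "w \<in> L n"
    have "integrable (M l) (indicat_real (Ev l n w))"
      by (rule integrable_real_indicator) (use sets[OF w] in \<open>auto simp: less_top[symmetric]\<close>)
    then show "integrable (M l) (\<lambda>z. F w * indicat_real (Ev l n w) z)"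
      by (rule integrable_mult_right)
  qed
  show "integrable (M l) (\<lambda>z. F (Ypre \<phi> z n))"
    by (rule Bochner_Integration.integrable_cong[THEN iffD2, OF refl _ int]) (rule prefix_fun_eq)
  have "integral\<^sup>L (M l) (\<lambda>z. F (Ypre \<phi> z n)) = integral\<^sup>L (M l) (\<lambda>z. \<Sum>w\<in>L n. F w * indicator (Ev l n w) z)"
    by (rule Bochner_Integration.integral_cong[OF refl]) (rule prefix_fun_eq)
  also have "\<dots> = (\<Sum>w\<in>L n. integral\<^sup>L (M l) (\<lambda>z. F w * indicat_real (Ev l n w) z))"
  proof (rule Bochner_Integration.integral_sum)
    fix w assume w: "w \<in> L n"
    have "integrable (M l) (indicat_real (Ev l n w))"
      by (rule integrable_real_indicator) (use sets[OF w] in \<open>auto simp: less_top[symmetric]\<close>)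
    then show "integrable (M l) (\<lambda>z. F w * indicat_real (Ev l n w) z)"
      by (rule integrable_mult_right)
  qed
  also have "\<dots> = (\<Sum>w\<in>L n. F w * measure (M l) (Ev l n w))"
  proof (rule sum.cong[OF refl])
    fix w assume w: "w \<in> L n"
    have "integral\<^sup>L (M l) (\<lambda>z. F w * indicat_real (Ev l n w) z) = F w * integral\<^sup>L (M l) (indicat_real (Ev l n w))"
      by (rule integral_mult_right_zero)
    also have "\<dots> = F w * measure (M l) (Ev l n w)"
      using sets[OF w] by (simp add: sets.Int_space_eq2)
    finally show "integral\<^sup>L (M l) (\<lambda>z. F w * indicat_real (Ev l n w) z) = F w * measure (M l) (Ev l n w)" .
  qed
  also have "\<dots> = (\<Sum>w\<in>L n. F w * Pr l w)"
  proof (rule sum.cong[OF refl])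
    fix w assume "w \<in> L n"
    then have "length w = n" by (simp add: L_def)
    then show "F w * measure (M l) (Ev l n w) = F w * Pr l w"
      using measure_Ev[OF assms] by simp
  qed
  finally show "integral\<^sup>L (M l) (\<lambda>z. F (Ypre \<phi> z n)) = (\<Sum>w\<in>L n. F w * Pr l w)" .
qed

lemma integral_step:
  fixes K :: "bool list \<Rightarrow> bool \<Rightarrow> real"
  assumes "0 < l" "Ok (Suc j)"
  shows "integrable (M l) (\<lambda>z. K (Ypre \<phi> z j) (Ypre \<phi> z (Suc j) ! j))"
    and "integral\<^sup>L (M l) (\<lambda>z. K (Ypre \<phi> z j) (Ypre \<phi> z (Suc j) ! j))
       = (\<Sum>w\<in>L j. Pr l w * (Gf l w True j * K w True + Gf l w False j * K w False))"
proof -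
  define F where "F v = K (take j v) (v ! j)" for v
  have eq: "K (Ypre \<phi> z j) (Ypre \<phi> z (Suc j) ! j) = F (Ypre \<phi> z (Suc j))" for z
    by (simp add: F_def Ypre_take)
  show "integrable (M l) (\<lambda>z. K (Ypre \<phi> z j) (Ypre \<phi> z (Suc j) ! j))"
    unfolding eq by (rule integral_prefix(1)[OF assms])
  have "integral\<^sup>L (M l) (\<lambda>z. K (Ypre \<phi> z j) (Ypre \<phi> z (Suc j) ! j)) = (\<Sum>v\<in>L (Suc j). F v * Pr l v)"
    unfolding eq by (rule integral_prefix(2)[OF assms])
  also have "\<dots> = (\<Sum>w\<in>L j. Pr l w * (Gf l w True j * K w True + Gf l w False j * K w False))"
    unfolding sum_L_Suc by (intro sum.cong refl) (simp add: F_def Pr_snoc L_def algebra_simps nth_append)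
  finally show "integral\<^sup>L (M l) (\<lambda>z. K (Ypre \<phi> z j) (Ypre \<phi> z (Suc j) ! j))
       = (\<Sum>w\<in>L j. Pr l w * (Gf l w True j * K w True + Gf l w False j * K w False))" .
qed

lemma prPhi0_eq:
  assumes "0 < l" "Ok i"
  shows "prPhi0 C p \<phi> l i = (\<Sum>w\<in>L i. (if \<phi> w then 0 else 1::real) * Pr l w)"
proof -
  interpret P: prob_space "M l" by (rule prob_M)
  let ?A = "{z \<in> space (M l). \<not> \<phi> (Ypre \<phi> z i)}"
  have "?A = (\<Union>w\<in>{w\<in>L i. \<not> \<phi> w}. Ev l i w)" by (auto simp: Ev_def)
  then have A: "?A \<in> sets (M l)"
    using Ev_sets[OF assms(2)] by (auto simp: L_def)
  have "prPhi0 C p \<phi> l i = measure (M l) ?A" by (simp add: prPhi0_def M_def)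
  also have "\<dots> = integral\<^sup>L (M l) (indicator ?A)" using A by simp
  also have "\<dots> = integral\<^sup>L (M l) (\<lambda>z. (\<lambda>w. if \<phi> w then 0 else 1::real) (Ypre \<phi> z i))"
    by (rule Bochner_Integration.integral_cong[OF refl]) (simp add: indicator_def)
  also have "\<dots> = (\<Sum>w\<in>L i. (if \<phi> w then 0 else 1) * Pr l w)"
    by (rule integral_prefix(2)[OF assms])
  finally show ?thesis .
qed

lemma sum_Pr_1:
  assumes "0 < l" "Ok n"
  shows "(\<Sum>w\<in>L n. Pr l w) = 1"
proof -
  interpret P: prob_space "M l" by (rule prob_M)
  have "integral\<^sup>L (M l) (\<lambda>z. (\<lambda>w. 1::real) (Ypre \<phi> z n)) = (\<Sum>w\<in>L n. 1 * Pr l w)"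
    by (rule integral_prefix(2)[OF assms])
  then show ?thesis by (simp add: P.prob_space)
qed

lemma prPhi0_le1:
  assumes "0 < l"
  shows "prPhi0 C p \<phi> l i \<le> 1" "0 \<le> prPhi0 C p \<phi> l i"
proof -
  interpret P: prob_space "M l" by (rule prob_M)
  have e: "prPhi0 C p \<phi> l i = measure (M l) {z \<in> space (M l). \<not> \<phi> (Ypre \<phi> z i)}"
    by (simp add: prPhi0_def M_def)
  show "prPhi0 C p \<phi> l i \<le> 1" unfolding e by (rule P.prob_le_1)
  show "0 \<le> prPhi0 C p \<phi> l i" unfolding e by (rule measure_nonneg)
qed

end


lemma ent_alg:
  fixes t :: real assumes "0 < t"
  shows "(1 - exp (-t)) * (- log 2 (1 - exp (-t))) + exp (-t) * (- log 2 (exp (-t))) = Hdot t"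
  by (simp add: log_def Hdot_def field_simps)

lemma a_id1:
  fixes t c :: real assumes "0 < t"
  shows "(1 - exp (-t)) * (c / (exp t - 1)) = exp (-t) * c"
proof -
  have "exp t > 1" using assms by simp
  then have ne: "exp t - 1 \<noteq> 0" by simp
  show ?thesis using ne by (simp add: exp_minus field_simps)
qed

lemma a_id2:
  fixes t c :: real assumes "0 < t"
  shows "(1 - exp (-t)) * (c / (exp t - 1))\<^sup>2 + exp (-t) * c\<^sup>2 = c\<^sup>2 / (exp t - 1)"
proof -
  have "exp t > 1" using assms by simp
  then have ne: "exp t - 1 \<noteq> 0" by simp
  have e: "exp t \<noteq> 0" by simp
  have "(1 - exp (-t)) * (c / (exp t - 1))\<^sup>2 = ((1 - exp (-t)) * (c / (exp t - 1))) * (c / (exp t - 1))"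
    by (simp add: power2_eq_square)
  also have "\<dots> = exp (-t) * c * (c / (exp t - 1))" using a_id1[OF assms, of c] by simp
  finally have h: "(1 - exp (-t)) * (c / (exp t - 1))\<^sup>2 = exp (-t) * c * (c / (exp t - 1))" .
  show ?thesis unfolding h using ne e by (simp add: exp_minus field_simps power2_eq_square)
qed

context dart begin

definition Lam :: "real \<Rightarrow> nat \<Rightarrow> bool list \<Rightarrow> real" where
  "Lam l i v = - log 2 (Gf l (take i v) (v ! i) i)"

definition a :: "real \<Rightarrow> nat \<Rightarrow> real" where "a l i = p i / (exp (p i * l) - 1)"

definition cf :: "real \<Rightarrow> nat \<Rightarrow> bool list \<Rightarrow> real" where
  "cf l i v = (if \<phi> (take i v) then 0 else if v ! i then a l i else - p i)"

lemma Ypre_nth_take: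
  assumes "i < n"
  shows "take i (Ypre \<phi> z n) = Ypre \<phi> z i" "Ypre \<phi> z n ! i = Ypre \<phi> z (Suc i) ! i"
  using assms by (simp_all add: Ypre_take Ypre_nth nth_append)

lemma cf_Ypre: "i < n \<Longrightarrow> cf l i (Ypre \<phi> z n) = cf l i (Ypre \<phi> z (Suc i))"
  unfolding cf_def using Ypre_nth_take[of i n z] Ypre_nth_take[of i "Suc i" z] by simp

lemma q_eq: "q l i = exp (- (p i * l))" by (simp add: q_def)

lemma E_Lam:
  assumes "0 < l" "i \<in> C"
  shows "integrable (M l) (\<lambda>z. Lam l i (Ypre \<phi> z (Suc i)))"
    and "integral\<^sup>L (M l) (\<lambda>z. Lam l i (Ypre \<phi> z (Suc i))) = Hdot (p i * l) * prPhi0 C p \<phi> l i"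
proof -
  have Ok: "Ok (Suc i)" "Ok i" using Ok_Suc[OF assms(2)] Ok_mono by auto
  define K where "K w b = - log 2 (Gf l w b i)" for w b
  have eq: "Lam l i (Ypre \<phi> z (Suc i)) = K (Ypre \<phi> z i) (Ypre \<phi> z (Suc i) ! i)" for z
    by (simp add: Lam_def K_def Ypre_take)
  show "integrable (M l) (\<lambda>z. Lam l i (Ypre \<phi> z (Suc i)))"
    unfolding eq by (rule integral_step(1)[OF assms(1) Ok(1)])
  have t: "0 < p i * l" using ppos[OF assms(2)] assms(1) by simp
  have "integral\<^sup>L (M l) (\<lambda>z. Lam l i (Ypre \<phi> z (Suc i)))
      = (\<Sum>w\<in>L i. Pr l w * (Gf l w True i * K w True + Gf l w False i * K w False))"
    unfolding eq by (rule integral_step(2)[OF assms(1) Ok(1)])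
  also have "\<dots> = (\<Sum>w\<in>L i. (if \<phi> w then 0 else 1) * Pr l w) * Hdot (p i * l)"
    unfolding sum_distrib_right
  proof (rule sum.cong[OF refl])
    fix w
    show "Pr l w * (Gf l w True i * K w True + Gf l w False i * K w False) =
          (if \<phi> w then 0 else 1) * Pr l w * Hdot (p i * l)"
      using ent_alg[OF t] by (auto simp: Gf_def K_def q_def)
  qed
  also have "\<dots> = Hdot (p i * l) * prPhi0 C p \<phi> l i"
    using prPhi0_eq[OF assms(1) Ok(2)] by simp
  finally show "integral\<^sup>L (M l) (\<lambda>z. Lam l i (Ypre \<phi> z (Suc i))) = Hdot (p i * l) * prPhi0 C p \<phi> l i" .
qed

lemma E_c2:
  assumes "0 < l" "i \<in> C"
  shows "integrable (M l) (\<lambda>z. (cf l i (Ypre \<phi> z (Suc i)))\<^sup>2)"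
    and "integral\<^sup>L (M l) (\<lambda>z. (cf l i (Ypre \<phi> z (Suc i)))\<^sup>2) = prPhi0 C p \<phi> l i * ((p i)\<^sup>2 / (exp (p i * l) - 1))"
proof -
  have Ok: "Ok (Suc i)" "Ok i" using Ok_Suc[OF assms(2)] Ok_mono by auto
  define K where "K w b = (if \<phi> w then 0 else if b then a l i else - p i)\<^sup>2" for w b
  have eq: "(cf l i (Ypre \<phi> z (Suc i)))\<^sup>2 = K (Ypre \<phi> z i) (Ypre \<phi> z (Suc i) ! i)" for z
    by (simp add: cf_def K_def Ypre_take)
  show "integrable (M l) (\<lambda>z. (cf l i (Ypre \<phi> z (Suc i)))\<^sup>2)"
    unfolding eq by (rule integral_step(1)[OF assms(1) Ok(1)])
  have t: "0 < p i * l" using ppos[OF assms(2)] assms(1) by simp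
  have "integral\<^sup>L (M l) (\<lambda>z. (cf l i (Ypre \<phi> z (Suc i)))\<^sup>2)
      = (\<Sum>w\<in>L i. Pr l w * (Gf l w True i * K w True + Gf l w False i * K w False))"
    unfolding eq by (rule integral_step(2)[OF assms(1) Ok(1)])
  also have "\<dots> = (\<Sum>w\<in>L i. (if \<phi> w then 0 else 1) * Pr l w) * ((p i)\<^sup>2 / (exp (p i * l) - 1))"
    unfolding sum_distrib_right
  proof (rule sum.cong[OF refl])
    fix w
    show "Pr l w * (Gf l w True i * K w True + Gf l w False i * K w False) =
          (if \<phi> w then 0 else 1) * Pr l w * ((p i)\<^sup>2 / (exp (p i * l) - 1))"
      using a_id2[OF t, of "p i"] by (auto simp: Gf_def K_def q_def a_def power2_eq_square)
  qed
  also have "\<dots> = prPhi0 C p \<phi> l i * ((p i)\<^sup>2 / (exp (p i * l) - 1))"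
    using prPhi0_eq[OF assms(1) Ok(2)] by simp
  finally show "integral\<^sup>L (M l) (\<lambda>z. (cf l i (Ypre \<phi> z (Suc i)))\<^sup>2) = prPhi0 C p \<phi> l i * ((p i)\<^sup>2 / (exp (p i * l) - 1))" .
qed

lemma E_abs:
  assumes "0 < l" "i \<in> C"
  shows "integrable (M l) (\<lambda>z. \<bar>cf l i (Ypre \<phi> z (Suc i))\<bar>)"
    and "integral\<^sup>L (M l) (\<lambda>z. \<bar>cf l i (Ypre \<phi> z (Suc i))\<bar>) \<le> 2 * p i"
proof -
  have Ok: "Ok (Suc i)" "Ok i" using Ok_Suc[OF assms(2)] Ok_mono by auto
  define K where "K w b = \<bar>if \<phi> w then 0 else if b then a l i else - p i\<bar>" for w b
  have eq: "\<bar>cf l i (Ypre \<phi> z (Suc i))\<bar> = K (Ypre \<phi> z i) (Ypre \<phi> z (Suc i) ! i)" for z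
    by (simp add: cf_def K_def Ypre_take)
  show "integrable (M l) (\<lambda>z. \<bar>cf l i (Ypre \<phi> z (Suc i))\<bar>)"
    unfolding eq by (rule integral_step(1)[OF assms(1) Ok(1)])
  have t: "0 < p i * l" using ppos[OF assms(2)] assms(1) by simp
  have pi: "0 < p i" using ppos[OF assms(2)] .
  have apos: "0 < a l i" unfolding a_def using pi t by simp
  have "integral\<^sup>L (M l) (\<lambda>z. \<bar>cf l i (Ypre \<phi> z (Suc i))\<bar>)
      = (\<Sum>w\<in>L i. Pr l w * (Gf l w True i * K w True + Gf l w False i * K w False))"
    unfolding eq by (rule integral_step(2)[OF assms(1) Ok(1)])
  also have "\<dots> \<le> (\<Sum>w\<in>L i. Pr l w * (2 * p i))"
  proof (rule sum_mono)
    fix w assume w: "w \<in> L i"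
    have Pw: "0 \<le> Pr l w" using Pr_nonneg[of l w] assms(1) Ok(2) w by (simp add: L_def)
    have "Gf l w True i * K w True + Gf l w False i * K w False \<le> 2 * p i"
    proof (cases "\<phi> w")
      case True then show ?thesis using pi by (simp add: Gf_def K_def)
    next
      case False
      have "Gf l w True i * K w True + Gf l w False i * K w False = (1 - q l i) * a l i + q l i * p i"
        using False apos pi by (simp add: Gf_def K_def)
      also have "\<dots> = 2 * (q l i * p i)"
        using a_id1[OF t, of "p i"] by (simp add: q_def a_def)
      also have "\<dots> \<le> 2 * p i"
        using q_le1[of l i] assms pi by (simp add: mult_left_le_one_le less_imp_le)
      finally show ?thesis .
    qed
    then show "Pr l w * (Gf l w True i * K w True + Gf l w False i * K w False) \<le> Pr l w * (2 * p i)"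
      by (rule mult_left_mono[OF _ Pw])
  qed
  also have "\<dots> = 2 * p i"
    using sum_Pr_1[OF assms(1) Ok(2)] by (simp add: sum_distrib_right[symmetric])
  finally show "integral\<^sup>L (M l) (\<lambda>z. \<bar>cf l i (Ypre \<phi> z (Suc i))\<bar>) \<le> 2 * p i" .
qed


lemma E_cross:
  assumes "0 < l" "j \<in> C" "i < j"
  shows "integrable (M l) (\<lambda>z. cf l i (Ypre \<phi> z (Suc i)) * cf l j (Ypre \<phi> z (Suc j)))"
    and "integral\<^sup>L (M l) (\<lambda>z. cf l i (Ypre \<phi> z (Suc i)) * cf l j (Ypre \<phi> z (Suc j))) = 0"
    and "integrable (M l) (\<lambda>z. \<bar>cf l i (Ypre \<phi> z (Suc i)) * cf l j (Ypre \<phi> z (Suc j))\<bar>)"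
    and "integral\<^sup>L (M l) (\<lambda>z. \<bar>cf l i (Ypre \<phi> z (Suc i)) * cf l j (Ypre \<phi> z (Suc j))\<bar>) \<le> 4 * p i * p j"
proof -
  have Ok: "Ok (Suc j)" "Ok j" using Ok_Suc[OF assms(2)] Ok_mono by auto
  have iC: "i \<in> C" using C_down[OF assms(2)] assms(3) by simp
  define K where "K w b = cf l i w * (if \<phi> w then 0 else if b then a l j else - p j)" for w b
  define K' where "K' w b = \<bar>K w b\<bar>" for w b
  have eq: "cf l i (Ypre \<phi> z (Suc i)) * cf l j (Ypre \<phi> z (Suc j)) = K (Ypre \<phi> z j) (Ypre \<phi> z (Suc j) ! j)" for z
    using cf_Ypre[OF assms(3), of l z] by (simp add: cf_def[of l j] K_def Ypre_take)
  have eq': "\<bar>cf l i (Ypre \<phi> z (Suc i)) * cf l j (Ypre \<phi> z (Suc j))\<bar> = K' (Ypre \<phi> z j) (Ypre \<phi> z (Suc j) ! j)" for z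
    using eq[of z] by (simp add: K'_def)
  show "integrable (M l) (\<lambda>z. cf l i (Ypre \<phi> z (Suc i)) * cf l j (Ypre \<phi> z (Suc j)))"
    unfolding eq by (rule integral_step(1)[OF assms(1) Ok(1)])
  show "integrable (M l) (\<lambda>z. \<bar>cf l i (Ypre \<phi> z (Suc i)) * cf l j (Ypre \<phi> z (Suc j))\<bar>)"
    unfolding eq' by (rule integral_step(1)[OF assms(1) Ok(1)])
  have t: "0 < p j * l" using ppos[OF assms(2)] assms(1) by simp
  have pj: "0 < p j" using ppos[OF assms(2)] .
  have apos: "0 < a l j" unfolding a_def using pj t by simp
  have "integral\<^sup>L (M l) (\<lambda>z. cf l i (Ypre \<phi> z (Suc i)) * cf l j (Ypre \<phi> z (Suc j)))
      = (\<Sum>w\<in>L j. Pr l w * (Gf l w True j * K w True + Gf l w False j * K w False))"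
    unfolding eq by (rule integral_step(2)[OF assms(1) Ok(1)])
  also have "\<dots> = (\<Sum>w\<in>L j. 0)"
  proof (rule sum.cong[OF refl])
    fix w
    have h: "(1 - q l j) * a l j = q l j * p j"
      using a_id1[OF t, of "p j"] by (simp add: q_def a_def)
    show "Pr l w * (Gf l w True j * K w True + Gf l w False j * K w False) = 0"
    proof (cases "\<phi> w")
      case True then show ?thesis by (simp add: K_def)
    next
      case False
      then have "Gf l w True j * K w True + Gf l w False j * K w False = cf l i w * ((1 - q l j) * a l j - q l j * p j)"
        by (simp add: Gf_def K_def algebra_simps)
      then show ?thesis using h by simp
    qed
  qed
  finally show "integral\<^sup>L (M l) (\<lambda>z. cf l i (Ypre \<phi> z (Suc i)) * cf l j (Ypre \<phi> z (Suc j))) = 0" by simp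
  have "integral\<^sup>L (M l) (\<lambda>z. \<bar>cf l i (Ypre \<phi> z (Suc i)) * cf l j (Ypre \<phi> z (Suc j))\<bar>)
      = (\<Sum>w\<in>L j. Pr l w * (Gf l w True j * K' w True + Gf l w False j * K' w False))"
    unfolding eq' by (rule integral_step(2)[OF assms(1) Ok(1)])
  also have "\<dots> \<le> (\<Sum>w\<in>L j. \<bar>cf l i w\<bar> * Pr l w) * (2 * p j)"
    unfolding sum_distrib_right
  proof (rule sum_mono)
    fix w assume w: "w \<in> L j"
    have Pw: "0 \<le> Pr l w" using Pr_nonneg[of l w] assms(1) Ok(2) w by (simp add: L_def)
    have "Gf l w True j * K' w True + Gf l w False j * K' w False \<le> \<bar>cf l i w\<bar> * (2 * p j)"
    proof (cases "\<phi> w")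
      case True then show ?thesis using pj by (simp add: Gf_def K_def K'_def)
    next
      case False
      have "Gf l w True j * K' w True + Gf l w False j * K' w False = \<bar>cf l i w\<bar> * ((1 - q l j) * a l j + q l j * p j)"
        using False apos pj q_lt1[OF assms(1,2)] q_pos[of l j]
        by (simp add: Gf_def K_def K'_def abs_mult algebra_simps)
      also have "(1 - q l j) * a l j + q l j * p j = 2 * (q l j * p j)"
        using a_id1[OF t, of "p j"] by (simp add: q_def a_def)
      also have "2 * (q l j * p j) \<le> 2 * p j"
        using q_le1[of l j] assms pj by (simp add: mult_left_le_one_le less_imp_le)
      finally show ?thesis by (simp add: mult_left_mono)
    qed
    then have "Pr l w * (Gf l w True j * K' w True + Gf l w False j * K' w False) \<le> Pr l w * (\<bar>cf l i w\<bar> * (2 * p j))"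
      by (rule mult_left_mono[OF _ Pw])
    then show "Pr l w * (Gf l w True j * K' w True + Gf l w False j * K' w False) \<le> \<bar>cf l i w\<bar> * Pr l w * (2 * p j)"
      by (simp add: algebra_simps)
  qed
  also have "(\<Sum>w\<in>L j. \<bar>cf l i w\<bar> * Pr l w) = integral\<^sup>L (M l) (\<lambda>z. \<bar>cf l i (Ypre \<phi> z j)\<bar>)"
    by (rule integral_prefix(2)[OF assms(1) Ok(2), symmetric])
  also have "\<dots> = integral\<^sup>L (M l) (\<lambda>z. \<bar>cf l i (Ypre \<phi> z (Suc i))\<bar>)"
    using cf_Ypre[OF assms(3)] by simp
  also have "\<dots> * (2 * p j) \<le> (2 * p i) * (2 * p j)"
    using E_abs(2)[OF assms(1) iC] pj by (simp add: mult_right_mono)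
  finally show "integral\<^sup>L (M l) (\<lambda>z. \<bar>cf l i (Ypre \<phi> z (Suc i)) * cf l j (Ypre \<phi> z (Suc j))\<bar>) \<le> 4 * p i * p j"
    by simp
qed

end


context dart begin

definition yl :: "(nat \<Rightarrow> bool) \<Rightarrow> nat \<Rightarrow> bool list" where "yl y n = map y [0..<n]"

lemma yl_length[simp]: "length (yl y n) = n" by (simp add: yl_def)
lemma yl_take: "m \<le> n \<Longrightarrow> take m (yl y n) = yl y m" by (simp add: yl_def take_map)
lemma yl_nth: "i < n \<Longrightarrow> yl y n ! i = y i" by (simp add: yl_def)
lemma yl_Suc: "yl y (Suc n) = yl y n @ [y n]" by (simp add: yl_def)

definition Tset :: "(nat \<Rightarrow> bool) \<Rightarrow> nat set" where
  "Tset y = {i \<in> C. \<not> \<phi> (yl y i) \<and> y i}"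
definition Uset :: "(nat \<Rightarrow> bool) \<Rightarrow> nat set" where
  "Uset y = {i \<in> C. \<not> \<phi> (yl y i) \<and> \<not> y i}"
definition good :: "(nat \<Rightarrow> bool) \<Rightarrow> bool" where
  "good y \<longleftrightarrow> (\<forall>i. i \<notin> C \<longrightarrow> \<not> y i) \<and> (\<forall>i\<in>C. \<phi> (yl y i) \<longrightarrow> y i) \<and> finite (Tset y)"
definition uU :: "(nat \<Rightarrow> bool) \<Rightarrow> nat \<Rightarrow> real" where
  "uU y i = (if i \<in> Uset y then p i else 0)"
definition SU :: "(nat \<Rightarrow> bool) \<Rightarrow> real" where "SU y = suminf (uU y)"
definition LL :: "real \<Rightarrow> (nat \<Rightarrow> bool) \<Rightarrow> real" where
  "LL l y = (\<Sum>i\<in>Tset y. ln (1 - q l i)) + (- l) * SU y"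
definition gC :: "real \<Rightarrow> (nat \<Rightarrow> bool) \<Rightarrow> nat \<Rightarrow> real" where
  "gC l y i = (if i \<in> Tset y then ln (1 - q l i) else 0) + (- l) * uU y i"

lemma uU_le: "0 \<le> uU y i" "uU y i \<le> pp i"
  using ppos by (auto simp: uU_def Uset_def pp_def less_imp_le)

lemma uU_summable: "summable (uU y)"
  by (rule summable_comparison_test[OF _ pp_summable]) (use uU_le in auto)

lemma SU_nonneg: "0 \<le> SU y"
  unfolding SU_def by (rule suminf_nonneg[OF uU_summable]) (simp add: uU_le)

lemma gC_sums: "finite (Tset y) \<Longrightarrow> gC l y sums LL l y"
  unfolding gC_def LL_def SU_def
  by (intro sums_add sums_If_finite_set sums_mult summable_sums uU_summable)

lemma Pr_yl: "Pr l (yl y n) = (\<Prod>i<n. Gf l (yl y i) (y i) i)"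
  unfolding Pr_def by (intro prod.cong) (auto simp: yl_take yl_nth)

lemma Pr_yl_exp:
  assumes "0 < l" "Ok n" "\<And>i. i < n \<Longrightarrow> \<phi> (yl y i) \<Longrightarrow> y i"
  shows "Pr l (yl y n) = exp (\<Sum>i<n. gC l y i)"
proof -
  have "Pr l (yl y n) = (\<Prod>i<n. exp (gC l y i))"
    unfolding Pr_yl
  proof (rule prod.cong[OF refl])
    fix i assume "i \<in> {..<n}"
    then have i: "i < n" "i \<in> C" using assms(2) by (auto simp: Ok_def)
    have q1: "q l i < 1" using q_lt1[OF assms(1) i(2)] .
    show "Gf l (yl y i) (y i) i = exp (gC l y i)"
      using assms(3)[OF i(1)] i q1
      by (auto simp: Gf_def gC_def Tset_def uU_def Uset_def q_def)
  qed
  also have "\<dots> = exp (\<Sum>i<n. gC l y i)" by (simp add: exp_sum)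
  finally show ?thesis .
qed

lemma Pr_yl_zero:
  assumes "Ok n" "i < n" "\<phi> (yl y i)" "\<not> y i"
  shows "Pr l (yl y n) = 0"
  unfolding Pr_yl using assms by (intro prod_zero) (auto simp: Gf_def)

lemma Pr_yl_T:
  assumes "0 < l" "k \<in> Tset y"
  shows "Pr l (yl y (Suc k)) \<le> p k * l"
proof -
  have k: "k \<in> C" "\<not> \<phi> (yl y k)" "y k" using assms(2) by (auto simp: Tset_def)
  have Ok: "Ok k" using Ok_Suc[OF k(1)] Ok_mono by auto
  have "Pr l (yl y (Suc k)) = Pr l (yl y k) * (1 - q l k)"
    unfolding yl_Suc Pr_snoc using k by (simp add: Gf_def)
  also have "\<dots> \<le> 1 * (1 - q l k)"
    using Pr_le1[of l "yl y k"] Ok q_le1[of l k] k assms(1) by (intro mult_right_mono) auto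
  also have "\<dots> \<le> p k * l"
    using exp_ge_add_one_self[of "- (p k * l)"] by (simp add: q_def)
  finally show ?thesis .
qed

lemma Ystate_event:
  assumes "\<And>i. i \<notin> C \<Longrightarrow> \<not> y i" "z \<in> space (M l)"
  shows "Ystate C \<phi> z = y \<longleftrightarrow> (\<forall>n. Ok n \<longrightarrow> Ypre \<phi> z n = yl y n)"
proof
  assume h: "Ystate C \<phi> z = y"
  show "\<forall>n. Ok n \<longrightarrow> Ypre \<phi> z n = yl y n"
  proof (intro allI impI)
    fix n assume n: "Ok n"
    show "Ypre \<phi> z n = yl y n"
    proof (rule nth_equalityI)
      fix i assume "i < length (Ypre \<phi> z n)"
      then have i: "i < n" "i \<in> C" using n by (auto simp: Ok_def)
      have "Ypre \<phi> z n ! i = Ypre \<phi> z (Suc i) ! i" using Ypre_nth_take(2)[OF i(1)] .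
      also have "\<dots> = y i" using h i(2) unfolding Ystate_def by (auto dest: fun_cong[of _ _ i])
      finally show "Ypre \<phi> z n ! i = yl y n ! i" using i by (simp add: yl_nth)
    qed simp
  qed
next
  assume h: "\<forall>n. Ok n \<longrightarrow> Ypre \<phi> z n = yl y n"
  show "Ystate C \<phi> z = y"
  proof
    fix i show "Ystate C \<phi> z i = y i"
    proof (cases "i \<in> C")
      case True
      then have "Ypre \<phi> z (Suc i) = yl y (Suc i)" using h Ok_Suc by blast
      then show ?thesis using True by (simp add: Ystate_def yl_nth del: Ypre.simps)
    next
      case False then show ?thesis using assms(1) by (simp add: Ystate_def)
    qed
  qed
qed

lemma Ypmf_eq_measure: "Ypmf C p \<phi> l y = measure (M l) {z \<in> space (M l). Ystate C \<phi> z = y}"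
  by (simp add: Ypmf_def M_def)

lemma Ypmf_le_Pr:
  assumes "0 < l" "Ok n"
  shows "Ypmf C p \<phi> l y \<le> Pr l (yl y n)"
proof -
  interpret P: prob_space "M l" by (rule prob_M)
  have "{z \<in> space (M l). Ystate C \<phi> z = y} \<subseteq> Ev l n (yl y n)"
  proof
    fix z assume z: "z \<in> {z \<in> space (M l). Ystate C \<phi> z = y}"
    have "\<not> y i" if "i \<notin> C" for i
    proof -
      have "Ystate C \<phi> z i = False" using that by (simp add: Ystate_def)
      then show ?thesis using z by simp
    qed
    then show "z \<in> Ev l n (yl y n)" using Ystate_event[of y z l] z assms(2) by (auto simp: Ev_def)
  qed
  then have "Ypmf C p \<phi> l y \<le> measure (M l) (Ev l n (yl y n))"
    unfolding Ypmf_eq_measure by (intro P.finite_measure_mono Ev_sets assms) simp_all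
  also have "\<dots> = Pr l (yl y n)" using measure_Ev[OF assms] by simp
  finally show ?thesis .
qed


lemma Ypmf_nonneg: "0 \<le> Ypmf C p \<phi> l y"
  by (simp add: Ypmf_def)

lemma Ypmf_bad:
  assumes "0 < l" "\<not> good y"
  shows "Ypmf C p \<phi> l y = 0"
proof (cases "\<exists>i. i \<notin> C \<and> y i")
  case True
  then obtain i where i: "i \<notin> C" "y i" by blast
  have "{z \<in> space (M l). Ystate C \<phi> z = y} = {}"
  proof -
    { fix z assume "Ystate C \<phi> z = y"
      then have "Ystate C \<phi> z i = y i" by simp
      then have False using i by (simp add: Ystate_def) }
    then show ?thesis by blast
  qed
  note e = this
  show ?thesis unfolding Ypmf_eq_measure e by simp
next
  case False
  then have offC: "\<And>i. i \<notin> C \<Longrightarrow> \<not> y i" by blast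
  show ?thesis
  proof (cases "\<exists>i\<in>C. \<phi> (yl y i) \<and> \<not> y i")
    case True
    then obtain i where i: "i \<in> C" "\<phi> (yl y i)" "\<not> y i" by blast
    have "Ypmf C p \<phi> l y \<le> Pr l (yl y (Suc i))"
      by (rule Ypmf_le_Pr[OF assms(1) Ok_Suc[OF i(1)]])
    also have "\<dots> = 0" using Pr_yl_zero[OF Ok_Suc[OF i(1)] _ i(2,3)] by simp
    finally show ?thesis using Ypmf_nonneg[of l y] by linarith
  next
    case False
    then have inf: "infinite (Tset y)" using assms(2) offC unfolding good_def by blast
    show ?thesis
    proof (rule ccontr)
      assume ne: "Ypmf C p \<phi> l y \<noteq> 0"
      then have v: "0 < Ypmf C p \<phi> l y" using Ypmf_nonneg[of l y] by linarith
      then have "0 < Ypmf C p \<phi> l y / l" using assms(1) by simp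
      then obtain K where K: "\<And>k. k \<ge> K \<Longrightarrow> \<bar>pp k - 0\<bar> < Ypmf C p \<phi> l y / l"
        using pp_lim[unfolded LIMSEQ_def dist_real_def] by blast
      obtain k where k: "k \<in> Tset y" "K \<le> k"
        using inf by (metis infinite_nat_iff_unbounded_le)
      have kC: "k \<in> C" using k(1) by (simp add: Tset_def)
      have "Ypmf C p \<phi> l y \<le> Pr l (yl y (Suc k))"
        by (rule Ypmf_le_Pr[OF assms(1) Ok_Suc[OF kC]])
      also have "\<dots> \<le> p k * l" by (rule Pr_yl_T[OF assms(1) k(1)])
      also have "\<dots> < Ypmf C p \<phi> l y"
        using K[OF k(2)] kC assms(1) ppos[OF kC] by (simp add: pp_def field_simps)
      finally show False by simp
    qed
  qed
qed

lemma Ypmf_good: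
  assumes "0 < l" "good y"
  shows "Ypmf C p \<phi> l y = exp (LL l y)"
proof -
  interpret P: prob_space "M l" by (rule prob_M)
  have offC: "\<And>i. i \<notin> C \<Longrightarrow> \<not> y i" and forced: "\<And>i. i \<in> C \<Longrightarrow> \<phi> (yl y i) \<Longrightarrow> y i"
    and fin: "finite (Tset y)" using assms(2) by (auto simp: good_def)
  have sums: "gC l y sums LL l y" by (rule gC_sums[OF fin])
  have Pr_eq: "Ok n \<Longrightarrow> Pr l (yl y n) = exp (\<Sum>i<n. gC l y i)" for n
    by (rule Pr_yl_exp[OF assms(1)]) (auto simp: Ok_def intro: forced)
  have ev: "{z \<in> space (M l). Ystate C \<phi> z = y} = {z \<in> space (M l). \<forall>n. Ok n \<longrightarrow> Ypre \<phi> z n = yl y n}"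
  proof (rule Collect_cong)
    fix z show "(z \<in> space (M l) \<and> Ystate C \<phi> z = y) = (z \<in> space (M l) \<and> (\<forall>n. Ok n \<longrightarrow> Ypre \<phi> z n = yl y n))"
      using Ystate_event[of y z l] offC by blast
  qed
  from C_cases show ?thesis
  proof
    assume "\<exists>N. C = {..<N}"
    then obtain N where N: "C = {..<N}" by blast
    have OkN: "Ok N" unfolding Ok_def by (simp add: N)
    have "{z \<in> space (M l). \<forall>n. Ok n \<longrightarrow> Ypre \<phi> z n = yl y n} = Ev l N (yl y N)"
    proof (safe)
      fix z assume "z \<in> space (M l)" "\<forall>n. Ok n \<longrightarrow> Ypre \<phi> z n = yl y n"
      then show "z \<in> Ev l N (yl y N)" using OkN by (simp add: Ev_def)
    next
      fix z assume "z \<in> Ev l N (yl y N)" then show "z \<in> space (M l)" by (simp add: Ev_def)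
    next
      fix z n assume z: "z \<in> Ev l N (yl y N)" and n: "Ok n"
      then have "n \<le> N" unfolding Ok_def by (auto simp: N)
      moreover have "Ypre \<phi> z N = yl y N" using z by (simp add: Ev_def)
      ultimately show "Ypre \<phi> z n = yl y n"
        by (metis Ypre_take yl_take)
    qed
    then have "Ypmf C p \<phi> l y = Pr l (yl y N)"
      unfolding Ypmf_eq_measure ev using measure_Ev[OF assms(1) OkN] by simp
    also have "\<dots> = exp (\<Sum>i<N. gC l y i)" by (rule Pr_eq[OF OkN])
    also have "(\<Sum>i<N. gC l y i) = LL l y"
    proof -
      have "gC l y sums (\<Sum>i\<in>{..<N}. gC l y i)"
      proof (rule sums_finite)
        fix i assume "i \<notin> {..<N}"
        then have "i \<notin> C" using N by simp
        then show "gC l y i = 0" unfolding gC_def Tset_def uU_def Uset_def by simp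
      qed simp
      then show ?thesis using sums sums_unique2 by blast
    qed
    finally show ?thesis .
  next
    assume U: "C = UNIV"
    have OkU: "Ok n" for n unfolding Ok_def by (simp add: U)
    have "{z \<in> space (M l). \<forall>n. Ok n \<longrightarrow> Ypre \<phi> z n = yl y n} = (\<Inter>n. Ev l n (yl y n))"
      using OkU by (auto simp: Ev_def)
    moreover have "(\<lambda>n. measure (M l) (Ev l n (yl y n))) \<longlonglongrightarrow> measure (M l) (\<Inter>n. Ev l n (yl y n))"
    proof (rule P.finite_Lim_measure_decseq)
      show "range (\<lambda>n. Ev l n (yl y n)) \<subseteq> sets (M l)" using Ev_sets OkU by auto
      show "decseq (\<lambda>n. Ev l n (yl y n))"
      proof (rule decseq_SucI)
        fix n show "Ev l (Suc n) (yl y (Suc n)) \<subseteq> Ev l n (yl y n)"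
          by (auto simp: Ev_def yl_Suc)
      qed
    qed
    ultimately have lim1: "(\<lambda>n. Pr l (yl y n)) \<longlonglongrightarrow> Ypmf C p \<phi> l y"
      unfolding Ypmf_eq_measure ev using measure_Ev[OF assms(1) OkU] by simp
    have "(\<lambda>n. exp (\<Sum>i<n. gC l y i)) \<longlonglongrightarrow> exp (LL l y)"
      using sums unfolding sums_def by (rule tendsto_exp)
    then have lim2: "(\<lambda>n. Pr l (yl y n)) \<longlonglongrightarrow> exp (LL l y)"
      using Pr_eq[OF OkU] by simp
    show ?thesis using LIMSEQ_unique[OF lim1 lim2] .
  qed
qed

lemma Ypmf_formula:
  assumes "0 < l"
  shows "Ypmf C p \<phi> l y = (if good y then exp (LL l y) else 0)"
  using Ypmf_good[OF assms] Ypmf_bad[OF assms] by auto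

lemma Ypmf_pos_iff:
  assumes "0 < l"
  shows "0 < Ypmf C p \<phi> l y \<longleftrightarrow> good y"
  using Ypmf_formula[OF assms] by auto

end


context dart begin

definition sc :: "real \<Rightarrow> (nat \<Rightarrow> bool) \<Rightarrow> real" where
  "sc l y = (\<Sum>i\<in>Tset y. a l i) - SU y"

lemma Tset_sub: "Tset y \<subseteq> C" by (auto simp: Tset_def)

lemma DERIV_ln_term:
  assumes "0 < l" "i \<in> C"
  shows "((\<lambda>x. ln (1 - q x i)) has_field_derivative a l i) (at l)"
proof -
  have t: "0 < p i * l" using ppos[OF assms(2)] assms(1) by simp
  have q1: "exp (- (p i * l)) < 1" using t by simp
  have "((\<lambda>x. ln (1 - exp (- (p i * x)))) has_field_derivative
          (p i * exp (- (p i * l))) / (1 - exp (- (p i * l)))) (at l)"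
    using q1 ppos[OF assms(2)] assms(1) by (auto intro!: derivative_eq_intros simp: field_simps)
  moreover have "(p i * exp (- (p i * l))) / (1 - exp (- (p i * l))) = a l i"
  proof -
    have "(1 - exp (- (p i * l))) * a l i = exp (- (p i * l)) * p i"
      unfolding a_def using a_id1[OF t, of "p i"] by simp
    moreover have ne: "1 - exp (- (p i * l)) \<noteq> 0" using q1 by linarith
    ultimately have "a l i = exp (- (p i * l)) * p i / (1 - exp (- (p i * l)))"
      by (simp add: eq_divide_eq mult.commute)
    then show ?thesis by (simp add: mult.commute)
  qed
  ultimately show ?thesis by (simp add: q_def)
qed

lemma DERIV_LL:
  assumes "0 < l" "finite (Tset y)"
  shows "((\<lambda>x. LL x y) has_field_derivative sc l y) (at l)"
proof -
  have d1: "((\<lambda>x. \<Sum>i\<in>Tset y. ln (1 - q x i)) has_field_derivative (\<Sum>i\<in>Tset y. a l i)) (at l)"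
    using Tset_sub by (intro DERIV_sum DERIV_ln_term[OF assms(1)]) auto
  have d2: "((\<lambda>x. (- x) * SU y) has_field_derivative (- 1) * SU y) (at l)"
    by (auto intro!: derivative_eq_intros)
  have "((\<lambda>x. (\<Sum>i\<in>Tset y. ln (1 - q x i)) + (- x) * SU y) has_field_derivative
      (\<Sum>i\<in>Tset y. a l i) + (- 1) * SU y) (at l)"
    by (rule DERIV_add[OF d1 d2])
  then show ?thesis by (simp add: LL_def[abs_def] sc_def)
qed

lemma deriv_Ypmf:
  assumes "0 < l" "good y"
  shows "deriv (\<lambda>x. Ypmf C p \<phi> x y) l = Ypmf C p \<phi> l y * sc l y"
proof -
  have fin: "finite (Tset y)" using assms(2) by (simp add: good_def)
  have "((\<lambda>x. exp (LL x y)) has_field_derivative exp (LL l y) * sc l y) (at l)"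
    by (rule DERIV_chain2[OF DERIV_exp DERIV_LL[OF assms(1) fin]])
  then have "((\<lambda>x. Ypmf C p \<phi> x y) has_field_derivative exp (LL l y) * sc l y) (at l)"
    by (rule has_field_derivative_transform_within_open[where S="{0<..}"])
       (use assms Ypmf_good in auto)
  then show ?thesis using Ypmf_good[OF assms] by (simp add: DERIV_imp_deriv)
qed

lemma Lam_yl:
  assumes "0 < l" "good y" "i \<in> C"
  shows "Lam l i (yl y (Suc i)) = - gC l y i / ln 2"
proof -
  have tk: "take i (yl y (Suc i)) = yl y i" "yl y (Suc i) ! i = y i" by (simp_all add: yl_take yl_nth)
  have forced: "\<phi> (yl y i) \<Longrightarrow> y i" using assms(2,3) by (simp add: good_def)
  have q1: "q l i < 1" using q_lt1[OF assms(1,3)] .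
  show ?thesis
    unfolding Lam_def tk using forced q1 assms(3)
    by (auto simp: Gf_def gC_def Tset_def uU_def Uset_def log_def q_def)
qed

lemma cf_yl:
  assumes "good y" "i \<in> C"
  shows "cf l i (yl y (Suc i)) = (if i \<in> Tset y then a l i else 0) - uU y i"
proof -
  have tk: "take i (yl y (Suc i)) = yl y i" "yl y (Suc i) ! i = y i" by (simp_all add: yl_take yl_nth)
  have forced: "\<phi> (yl y i) \<Longrightarrow> y i" using assms by (simp add: good_def)
  show ?thesis
    unfolding cf_def tk using forced assms(2)
    by (auto simp: Tset_def uU_def Uset_def)
qed

definition hy :: "real \<Rightarrow> (nat \<Rightarrow> bool) \<Rightarrow> nat \<Rightarrow> real" where
  "hy l y i = (if i \<in> C then Lam l i (yl y (Suc i)) else 0)"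

definition cy :: "real \<Rightarrow> (nat \<Rightarrow> bool) \<Rightarrow> nat \<Rightarrow> real" where
  "cy l y i = (if i \<in> C then cf l i (yl y (Suc i)) else 0)"

lemma hy_eq: "0 < l \<Longrightarrow> good y \<Longrightarrow> hy l y i = - gC l y i / ln 2"
  using Lam_yl[of l y i] by (auto simp: hy_def gC_def Tset_def uU_def Uset_def)

lemma cy_eq: "good y \<Longrightarrow> cy l y i = (if i \<in> Tset y then a l i else 0) - uU y i"
  using cf_yl[of y i l] by (auto simp: cy_def Tset_def uU_def Uset_def)

lemma hy_sums: "0 < l \<Longrightarrow> good y \<Longrightarrow> hy l y sums (- LL l y / ln 2)"
proof -
  assume l: "0 < l" and g: "good y"
  have e: "hy l y = (\<lambda>n. - gC l y n / ln 2)" by (rule ext) (simp add: hy_eq[OF l g])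
  show ?thesis unfolding e
    using sums_divide[OF sums_minus[OF gC_sums[of y l]], of "ln 2"] g by (simp add: good_def)
qed

lemma gC_nonpos: "0 < l \<Longrightarrow> gC l y i \<le> 0"
proof -
  assume l: "0 < l"
  have "ln (1 - q l i) \<le> 0" if "i \<in> Tset y"
  proof -
    have "i \<in> C" using that by (simp add: Tset_def)
    then have "0 < 1 - q l i" using q_lt1[OF l] by simp
    then have "ln (1 - q l i) \<le> (1 - q l i) - 1" by (rule ln_le_minus_one)
    then show ?thesis using q_pos[of l i] by simp
  qed
  moreover have "0 \<le> l * uU y i" using l uU_le(1)[of y i] by simp
  ultimately show ?thesis by (auto simp: gC_def)
qed

lemma hy_nonneg: "0 < l \<Longrightarrow> good y \<Longrightarrow> 0 \<le> hy l y i"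
  using gC_nonpos[of l y i] by (simp add: hy_eq divide_nonpos_pos)

lemma cy_sums: "good y \<Longrightarrow> cy l y sums sc l y"
proof -
  assume g: "good y"
  have "(\<lambda>i. (if i \<in> Tset y then a l i else 0) - uU y i) sums ((\<Sum>i\<in>Tset y. a l i) - SU y)"
    unfolding SU_def
    by (intro sums_diff sums_If_finite_set summable_sums uU_summable) (use g in \<open>simp add: good_def\<close>)
  moreover have e: "cy l y = (\<lambda>i. (if i \<in> Tset y then a l i else 0) - uU y i)"
    by (rule ext) (simp add: cy_eq g)
  ultimately show ?thesis by (simp add: sc_def)
qed

lemma cy_abs_summable: "good y \<Longrightarrow> summable (\<lambda>i. \<bar>cy l y i\<bar>)"
proof -
  assume g: "good y"
  have s: "summable (\<lambda>i. (if i \<in> Tset y then \<bar>a l i\<bar> else 0) + uU y i)"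
    by (intro summable_add summable_If_finite_set uU_summable) (use g in \<open>simp add: good_def\<close>)
  show ?thesis
  proof (rule summable_comparison_test[OF _ s])
    show "\<exists>N. \<forall>n\<ge>N. norm \<bar>cy l y n\<bar> \<le> (if n \<in> Tset y then \<bar>a l n\<bar> else 0) + uU y n"
    proof (intro exI allI impI)
      fix n
      have u: "0 \<le> uU y n" by (rule uU_le)
      show "norm \<bar>cy l y n\<bar> \<le> (if n \<in> Tset y then \<bar>a l n\<bar> else 0) + uU y n"
        using u by (simp add: cy_eq[OF g] abs_diff_le_iff abs_le_iff) (smt (verit))
    qed
  qed
qed

end


lemma infsum_ennreal_nn:
  fixes f :: "'a \<Rightarrow> ennreal"
  assumes "countable A"
  shows "infsum f A = (\<integral>\<^sup>+x. f x \<partial>count_space A)"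
proof (cases "finite A")
  case True then show ?thesis by (simp add: nn_integral_count_space_finite)
next
  case False
  have bij: "bij_betw (from_nat_into A) UNIV A" by (rule bij_betw_from_nat_into[OF assms False])
  have "infsum f A = infsum (\<lambda>n. f (from_nat_into A n)) UNIV"
    by (rule infsum_reindex_bij_betw[OF bij, symmetric])
  also have "\<dots> = (\<Sum>n. f (from_nat_into A n))"
  proof -
    have "((\<lambda>n. f (from_nat_into A n)) has_sum infsum (\<lambda>n. f (from_nat_into A n)) UNIV) UNIV"
      by (rule has_sum_infsum, rule nonneg_summable_on_complete) simp
    then show ?thesis by (simp add: sums_unique has_sum_imp_sums)
  qed
  also have "\<dots> = (\<integral>\<^sup>+n. f (from_nat_into A n) \<partial>count_space UNIV)"
    by (simp add: nn_integral_count_space_nat)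
  also have "\<dots> = (\<integral>\<^sup>+x. f x \<partial>count_space A)"
    by (rule nn_integral_bij_count_space[OF bij])
  finally show ?thesis .
qed

lemma infsum_nat_ennreal:
  fixes f :: "nat \<Rightarrow> ennreal"
  shows "infsum f C = (\<Sum>i. if i \<in> C then f i else 0)"
proof -
  have "infsum f C = infsum (\<lambda>i. if i \<in> C then f i else 0) UNIV"
    by (rule infsum_cong_neutral) auto
  also have "\<dots> = (\<Sum>i. if i \<in> C then f i else 0)"
  proof -
    have "((\<lambda>i. if i \<in> C then f i else 0) has_sum infsum (\<lambda>i. if i \<in> C then f i else 0) UNIV) UNIV"
      by (rule has_sum_infsum, rule nonneg_summable_on_complete) simp
    then show ?thesis by (simp add: sums_unique has_sum_imp_sums)
  qed
  finally show ?thesis .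
qed

context dart begin

lemma yl_Ystate: "Ok n \<Longrightarrow> yl (Ystate C \<phi> z) n = Ypre \<phi> z n"
proof (rule nth_equalityI)
  fix i assume n: "Ok n" and "i < length (yl (Ystate C \<phi> z) n)"
  then have i: "i < n" "i \<in> C" by (auto simp: Ok_def)
  show "yl (Ystate C \<phi> z) n ! i = Ypre \<phi> z n ! i"
  proof -
    have "yl (Ystate C \<phi> z) n ! i = Ypre \<phi> z (Suc i) ! i" using i by (simp add: yl_nth Ystate_def)
    also have "\<dots> = Ypre \<phi> z n ! i" by (rule Ypre_nth_take(2)[OF i(1), symmetric])
    finally show ?thesis .
  qed
qed simp

lemma Ystate_good:
  assumes "finite {i \<in> C. 0 < z i}"
  shows "good (Ystate C \<phi> z)"
proof -
  have off: "\<forall>i. i \<notin> C \<longrightarrow> \<not> Ystate C \<phi> z i" by (simp add: Ystate_def)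
  have st: "Ystate C \<phi> z i = (0 < z i \<or> \<phi> (yl (Ystate C \<phi> z) i))" if "i \<in> C" for i
  proof -
    have "yl (Ystate C \<phi> z) i = Ypre \<phi> z i" using yl_Ystate Ok_Suc[OF that] Ok_mono by auto
    then show ?thesis using that by (simp add: Ystate_def Ypre_nth nth_append)
  qed
  have "Tset (Ystate C \<phi> z) \<subseteq> {i \<in> C. 0 < z i}"
  proof
    fix i assume "i \<in> Tset (Ystate C \<phi> z)"
    then have i: "i \<in> C" "\<not> \<phi> (yl (Ystate C \<phi> z) i)" "Ystate C \<phi> z i" by (simp_all add: Tset_def)
    then show "i \<in> {i \<in> C. 0 < z i}" using st[OF i(1)] by blast
  qed
  then have "finite (Tset (Ystate C \<phi> z))" using assms finite_subset by blast
  moreover have "\<forall>i\<in>C. \<phi> (yl (Ystate C \<phi> z) i) \<longrightarrow> Ystate C \<phi> z i"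
    using st by blast
  ultimately show ?thesis using off unfolding good_def by blast
qed

lemma measure_Poi_pos:
  assumes "0 < l" "i \<in> C"
  shows "measure (Poi l i) {k. 0 < k} = 1 - q l i"
proof -
  have r: "0 < p i * l" using assms ppos by simp
  interpret P: prob_space "Poi l i" unfolding Poi_def by (rule prob_space_measure_pmf)
  have m0: "measure (Poi l i) {0} = q l i"
    unfolding Poi_def q_def using r by (simp add: measure_pmf_single)
  have "{k::nat. 0 < k} = space (Poi l i) - {0}" by auto
  then show ?thesis using P.prob_compl[of "{0}"] m0 by simp
qed

definition Hn :: "real \<Rightarrow> nat \<Rightarrow> (nat \<Rightarrow> nat) set" where
  "Hn l n = (if n \<in> C then {z \<in> space (M l). 0 < z n} else {})"

lemma Hn_emb: "n \<in> C \<Longrightarrow> Hn l n = prod_emb C (Poi l) {n} (PiE {n} (\<lambda>_. {k. 0 < k}))"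
  unfolding Hn_def prod_emb_def by (auto simp: M_eq restrict_PiE_iff space_PiM)

lemma Hn_sets: "Hn l n \<in> sets (M l)"
  by (cases "n \<in> C") (simp_all add: Hn_emb M_eq sets_PiM_I_finite, simp add: Hn_def)

lemma measure_Hn:
  assumes "0 < l"
  shows "measure (M l) (Hn l n) \<le> l * pp n"
proof (cases "n \<in> C")
  case True
  interpret P: prob_space "Poi l n" unfolding Poi_def by (rule prob_space_measure_pmf)
  have "emeasure (M l) (Hn l n) = (\<Prod>i\<in>{n}. emeasure (Poi l i) {k. 0 < k})"
    unfolding Hn_emb[OF True] M_eq
    by (rule emeasure_PiM_emb) (use True in \<open>auto simp: Poi_def prob_space_measure_pmf\<close>)
  also have "\<dots> = ennreal (1 - q l n)"
    using measure_Poi_pos[OF assms True] by (simp add: P.emeasure_eq_measure)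
  finally have "measure (M l) (Hn l n) = 1 - q l n"
    using q_le1[of l n] assms True by (simp add: measure_def)
  also have "\<dots> \<le> p n * l"
    using exp_ge_add_one_self[of "- (p n * l)"] by (simp add: q_def)
  finally show ?thesis using True by (simp add: pp_def mult.commute)
next
  case False then show ?thesis by (simp add: Hn_def pp_def)
qed

lemma AE_finite_hits:
  assumes "0 < l"
  shows "AE z in M l. finite {i \<in> C. 0 < z i}"
proof -
  interpret P: prob_space "M l" by (rule prob_M)
  have sm: "summable (\<lambda>n. measure (M l) (Hn l n))"
  proof (rule summable_comparison_test[OF _ summable_mult[OF pp_summable, of l]])
    show "\<exists>N. \<forall>n\<ge>N. norm (measure (M l) (Hn l n)) \<le> l * pp n"
      using measure_Hn[OF assms] by (auto simp: measure_nonneg)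
  qed
  have "AE z in M l. eventually (\<lambda>n. z \<in> space (M l) - Hn l n) sequentially"
    by (rule borel_cantelli_AE1[OF Hn_sets]) (simp_all add: sm P.emeasure_finite less_top[symmetric])
  moreover have "AE z in M l. z \<in> space (M l)" by (rule AE_space)
  ultimately show ?thesis
  proof (eventually_elim)
    case (elim z)
    then obtain N where N: "\<And>n. n \<ge> N \<Longrightarrow> z \<notin> Hn l n"
      by (auto simp: eventually_sequentially)
    have "{i \<in> C. 0 < z i} \<subseteq> {..<N}"
    proof
      fix i assume i: "i \<in> {i \<in> C. 0 < z i}"
      show "i \<in> {..<N}"
      proof (rule ccontr)
        assume "i \<notin> {..<N}"
        then have "z \<notin> Hn l i" using N by simp
        then show False using i elim(2) by (simp add: Hn_def)
      qed
    qed
    then show ?case using finite_subset by blast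
  qed
qed

lemma AE_good: "0 < l \<Longrightarrow> AE z in M l. good (Ystate C \<phi> z)"
proof -
  assume l: "0 < l"
  show ?thesis using AE_finite_hits[OF l] by (rule eventually_mono) (rule Ystate_good)
qed

lemma countable_good: "countable {y. good y}"
proof -
  define F where "F T = Ystate C \<phi> (restrict (\<lambda>i. if i \<in> T then 1::nat else 0) C)" for T
  have "{y. good y} \<subseteq> F ` {T. finite T}"
  proof
    fix y assume "y \<in> {y. good y}"
    then have g: "good y" by simp
    define zT where "zT = restrict (\<lambda>i. if i \<in> Tset y then 1::nat else 0) C"
    have sp: "zT \<in> space (M 1)" by (simp add: space_M zT_def)
    have offC: "\<And>i. i \<notin> C \<Longrightarrow> \<not> y i" using g by (simp add: good_def)
    have "\<forall>n. Ok n \<longrightarrow> Ypre \<phi> zT n = yl y n"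
    proof (intro allI impI)
      fix n assume n: "Ok n"
      show "Ypre \<phi> zT n = yl y n"
        unfolding Ypre_eq_iff
      proof (intro conjI allI impI)
        fix i assume i: "i < n"
        then have iC: "i \<in> C" using n by (auto simp: Ok_def)
        have "y i = (i \<in> Tset y \<or> \<phi> (yl y i))" using g iC by (auto simp: good_def Tset_def)
        then show "yl y n ! i = (0 < zT i \<or> \<phi> (take i (yl y n)))"
          using i iC by (simp add: yl_nth yl_take zT_def)
      qed simp
    qed
    then have "Ystate C \<phi> zT = y" using Ystate_event[of y zT 1] offC sp by blast
    then show "y \<in> F ` {T. finite T}" using g unfolding F_def zT_def good_def
      by (intro image_eqI[of _ _ "Tset y"]) auto
  qed
  moreover have "countable (F ` {T. finite T})"
    by (intro countable_image countable_Collect_finite)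
  ultimately show ?thesis using countable_subset by blast
qed

definition Eset :: "real \<Rightarrow> (nat \<Rightarrow> bool) \<Rightarrow> (nat \<Rightarrow> nat) set" where
  "Eset l y = {z \<in> space (M l). Ystate C \<phi> z = y}"

lemma Eset_sets:
  assumes "good y"
  shows "Eset l y \<in> sets (M l)"
proof -
  have offC: "\<And>i. i \<notin> C \<Longrightarrow> \<not> y i" using assms by (simp add: good_def)
  have "Eset l y = (\<Inter>n\<in>{n. Ok n}. Ev l n (yl y n))"
  proof (rule set_eqI)
    fix z
    have "Ok 0" by (simp add: Ok_def)
    then show "z \<in> Eset l y \<longleftrightarrow> z \<in> (\<Inter>n\<in>{n. Ok n}. Ev l n (yl y n))"
      using Ystate_event[of y z l] offC by (auto simp: Eset_def Ev_def)
  qed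
  moreover have "(\<Inter>n\<in>{n. Ok n}. Ev l n (yl y n)) \<in> sets (M l)"
    by (rule sets.countable_INT) (auto simp: Ev_sets Ok_def)
  ultimately show ?thesis by simp
qed

lemma Ypmf_Eset: "Ypmf C p \<phi> l y = measure (M l) (Eset l y)"
  by (simp add: Ypmf_eq_measure Eset_def)

lemma conversion:
  fixes g :: "(nat \<Rightarrow> bool) \<Rightarrow> ennreal"
  assumes "0 < l"
  shows "(\<integral>\<^sup>+y. ennreal (Ypmf C p \<phi> l y) * g y \<partial>count_space {y. good y})
       = (\<integral>\<^sup>+z. g (Ystate C \<phi> z) \<partial>M l)"
proof -
  interpret P: prob_space "M l" by (rule prob_M)
  have "(\<integral>\<^sup>+y. ennreal (Ypmf C p \<phi> l y) * g y \<partial>count_space {y. good y})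
      = (\<integral>\<^sup>+y. (\<integral>\<^sup>+z. g y * indicator (Eset l y) z \<partial>M l) \<partial>count_space {y. good y})"
  proof (rule nn_integral_cong)
    fix y assume "y \<in> space (count_space {y. good y})"
    then have g: "good y" by simp
    show "ennreal (Ypmf C p \<phi> l y) * g y = (\<integral>\<^sup>+z. g y * indicator (Eset l y) z \<partial>M l)"
      using Eset_sets[OF g] by (simp add: nn_integral_cmult_indicator Ypmf_Eset P.emeasure_eq_measure mult.commute)
  qed
  also have "\<dots> = (\<integral>\<^sup>+z. (\<integral>\<^sup>+y. g y * indicator (Eset l y) z \<partial>count_space {y. good y}) \<partial>M l)"
    by (rule nn_integral_count_space_nn_integral[symmetric])
       (use countable_good Eset_sets in auto)
  also have "\<dots> = (\<integral>\<^sup>+z. g (Ystate C \<phi> z) \<partial>M l)"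
  proof (rule nn_integral_cong_AE)
    show "AE z in M l. (\<integral>\<^sup>+y. g y * indicator (Eset l y) z \<partial>count_space {y. good y}) = g (Ystate C \<phi> z)"
      using AE_good[OF assms] AE_space
    proof (eventually_elim)
      case (elim z)
      have "(\<integral>\<^sup>+y. g y * indicator (Eset l y) z \<partial>count_space {y. good y})
          = (\<Sum>y\<in>{Ystate C \<phi> z}. g y * indicator (Eset l y) z)"
        by (rule nn_integral_count_space') (use elim in \<open>auto simp: Eset_def\<close>)
      also have "\<dots> = g (Ystate C \<phi> z)" using elim by (simp add: Eset_def)
      finally show ?case .
    qed
  qed
  finally show ?thesis .
qed

end


context dart begin

lemma Lam_nonneg: "0 \<le> l \<Longrightarrow> i \<in> C \<Longrightarrow> 0 \<le> Lam l i v"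
proof -
  assume l: "0 \<le> l" and i: "i \<in> C"
  have g0: "0 \<le> Gf l (take i v) (v ! i) i" and g1: "Gf l (take i v) (v ! i) i \<le> 1"
    using Gf_nonneg[OF l i] Gf_le1[OF l i] by auto
  show ?thesis
  proof (cases "Gf l (take i v) (v ! i) i = 0")
    case True then show ?thesis by (simp add: Lam_def log_def)
  next
    case False
    then have "0 < Gf l (take i v) (v ! i) i" using g0 by simp
    then have "log 2 (Gf l (take i v) (v ! i) i) \<le> 0" using g1 by (simp add: log_le_zero_cancel_iff)
    then show ?thesis by (simp add: Lam_def)
  qed
qed

definition hz :: "real \<Rightarrow> nat \<Rightarrow> (nat \<Rightarrow> nat) \<Rightarrow> real" where
  "hz l i z = (if i \<in> C then Lam l i (Ypre \<phi> z (Suc i)) else 0)"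

lemma hz_integrable: "0 < l \<Longrightarrow> integrable (M l) (hz l i)"
  unfolding hz_def by (cases "i \<in> C") (simp_all add: E_Lam(1) del: Ypre.simps)

lemma hz_integral: "0 < l \<Longrightarrow> integral\<^sup>L (M l) (hz l i) = (if i \<in> C then Hdot (p i * l) * prPhi0 C p \<phi> l i else 0)"
  unfolding hz_def by (cases "i \<in> C") (simp_all add: E_Lam(2) del: Ypre.simps)

lemma hz_nonneg: "0 < l \<Longrightarrow> 0 \<le> hz l i z"
  unfolding hz_def using Lam_nonneg[of l i] by simp

lemma hz_hy: "good (Ystate C \<phi> z) \<Longrightarrow> hz l i z = hy l (Ystate C \<phi> z) i"
  unfolding hz_def hy_def using yl_Ystate[OF Ok_Suc, of i z] by auto

lemma entropy_part:
  assumes l: "0 < l"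
  shows "entropyY C p \<phi> l = (\<Sum>\<^sub>\<infinity>i\<in>C. ennreal (Hdot (p i * l) * prPhi0 C p \<phi> l i))"
proof -
  interpret P: prob_space "M l" by (rule prob_M)
  let ?P = "\<lambda>y. Ypmf C p \<phi> l y"
  have S: "{y. 0 < ?P y} = {y. good y}" using Ypmf_pos_iff[OF l] by auto
  have P1: "?P y \<le> 1" for y unfolding Ypmf_Eset by (rule P.prob_le_1)
  have "entropyY C p \<phi> l = (\<Sum>\<^sub>\<infinity>y\<in>{y. good y}. ennreal (- ?P y * log 2 (?P y)))"
    unfolding entropyY_def S ..
  also have "\<dots> = (\<integral>\<^sup>+y. ennreal (- ?P y * log 2 (?P y)) \<partial>count_space {y. good y})"
    by (rule infsum_ennreal_nn[OF countable_good])
  also have "\<dots> = (\<integral>\<^sup>+y. ennreal (?P y) * ennreal (- log 2 (?P y)) \<partial>count_space {y. good y})"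
  proof (rule nn_integral_cong)
    fix y assume "y \<in> space (count_space {y. good y})"
    then have "0 < ?P y" using S by auto
    moreover have "log 2 (?P y) \<le> 0" using \<open>0 < ?P y\<close> P1[of y] by (simp add: log_le_zero_cancel_iff)
    ultimately show "ennreal (- ?P y * log 2 (?P y)) = ennreal (?P y) * ennreal (- log 2 (?P y))"
      by (simp add: ennreal_mult[symmetric])
  qed
  also have "\<dots> = (\<integral>\<^sup>+z. ennreal (- log 2 (?P (Ystate C \<phi> z))) \<partial>M l)"
    by (rule conversion[OF l])
  also have "\<dots> = (\<integral>\<^sup>+z. (\<Sum>i. ennreal (hz l i z)) \<partial>M l)"
  proof (rule nn_integral_cong_AE)
    show "AE z in M l. ennreal (- log 2 (?P (Ystate C \<phi> z))) = (\<Sum>i. ennreal (hz l i z))"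
      using AE_good[OF l]
    proof (eventually_elim)
      case (elim z)
      let ?y = "Ystate C \<phi> z"
      have "(\<Sum>i. ennreal (hz l i z)) = (\<Sum>i. ennreal (hy l ?y i))"
        using hz_hy[OF elim] by simp
      also have "\<dots> = ennreal (\<Sum>i. hy l ?y i)"
        using hy_nonneg[OF l elim] hy_sums[OF l elim] by (intro suminf_ennreal2) (auto simp: sums_iff)
      also have "(\<Sum>i. hy l ?y i) = - LL l ?y / ln 2" using hy_sums[OF l elim] by (simp add: sums_iff)
      also have "\<dots> = - log 2 (?P ?y)" using Ypmf_good[OF l elim] by (simp add: log_def)
      finally show ?case by simp
    qed
  qed
  also have "\<dots> = (\<Sum>i. \<integral>\<^sup>+z. ennreal (hz l i z) \<partial>M l)"
  proof (rule nn_integral_suminf)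
    fix i
    have "hz l i \<in> borel_measurable (M l)" using hz_integrable[OF l] by (rule borel_measurable_integrable)
    then show "(\<lambda>z. ennreal (hz l i z)) \<in> borel_measurable (M l)" by measurable
  qed
  also have "\<dots> = (\<Sum>i. ennreal (if i \<in> C then Hdot (p i * l) * prPhi0 C p \<phi> l i else 0))"
  proof (rule suminf_cong)
    fix i
    show "(\<integral>\<^sup>+z. ennreal (hz l i z) \<partial>M l) = ennreal (if i \<in> C then Hdot (p i * l) * prPhi0 C p \<phi> l i else 0)"
      using nn_integral_eq_integral[OF hz_integrable[OF l], of i] hz_nonneg[OF l] hz_integral[OF l]
      by simp
  qed
  also have "\<dots> = (\<Sum>\<^sub>\<infinity>i\<in>C. ennreal (Hdot (p i * l) * prPhi0 C p \<phi> l i))"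
    unfolding infsum_nat_ennreal by (intro suminf_cong) simp
  finally show ?thesis .
qed

end


context dart begin

definition cz :: "real \<Rightarrow> nat \<Rightarrow> (nat \<Rightarrow> nat) \<Rightarrow> real" where
  "cz l i z = (if i \<in> C then cf l i (Ypre \<phi> z (Suc i)) else 0)"

definition V :: "real \<Rightarrow> nat \<Rightarrow> real" where
  "V l i = (if i \<in> C then prPhi0 C p \<phi> l i * ((p i)\<^sup>2 / (exp (p i * l) - 1)) else 0)"

definition B :: "real \<Rightarrow> nat \<Rightarrow> nat \<Rightarrow> real" where
  "B l i j = 4 * pp i * pp j + (if j = i then pp j / l else 0)"

lemma cz_prod_int:
  assumes l: "0 < l"
  shows "integrable (M l) (\<lambda>z. cz l i z * cz l j z)"
    and "integrable (M l) (\<lambda>z. \<bar>cz l i z * cz l j z\<bar>)"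
    and "integral\<^sup>L (M l) (\<lambda>z. cz l i z * cz l j z) = (if j = i then V l i else 0)"
    and "integral\<^sup>L (M l) (\<lambda>z. \<bar>cz l i z * cz l j z\<bar>) \<le> B l i j"
proof -
  have Bnn: "0 \<le> B l i j" using pp_nonneg[of i] pp_nonneg[of j] l by (simp add: B_def)
  have gen: "integrable (M l) (\<lambda>z. cz l i z * cz l j z) \<and> integrable (M l) (\<lambda>z. \<bar>cz l i z * cz l j z\<bar>)
    \<and> integral\<^sup>L (M l) (\<lambda>z. cz l i z * cz l j z) = (if j = i then V l i else 0)
    \<and> integral\<^sup>L (M l) (\<lambda>z. \<bar>cz l i z * cz l j z\<bar>) \<le> B l i j" if ij: "i < j" for i j
  proof (cases "j \<in> C")
    case False
    then show ?thesis using ij pp_nonneg[of i] pp_nonneg[of j] l by (simp add: cz_def B_def)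
  next
    case True
    have iC: "i \<in> C" using C_down[OF True] ij by simp
    have e: "cz l i z * cz l j z = cf l i (Ypre \<phi> z (Suc i)) * cf l j (Ypre \<phi> z (Suc j))" for z
      using True iC by (simp add: cz_def del: Ypre.simps)
    show ?thesis unfolding e using E_cross[OF l True ij] ij iC True
      by (simp add: pp_def B_def del: Ypre.simps)
  qed
  have diag: "integrable (M l) (\<lambda>z. cz l i z * cz l i z) \<and> integral\<^sup>L (M l) (\<lambda>z. cz l i z * cz l i z) = V l i
      \<and> V l i \<le> B l i i"
  proof -
    have sq: "cz l i z * cz l i z = (if i \<in> C then (cf l i (Ypre \<phi> z (Suc i)))\<^sup>2 else 0)" for z
      by (simp add: cz_def power2_eq_square del: Ypre.simps)
    have int: "integrable (M l) (\<lambda>z. cz l i z * cz l i z)"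
      unfolding sq by (cases "i \<in> C") (simp_all add: E_c2(1)[OF l] del: Ypre.simps)
    have val: "integral\<^sup>L (M l) (\<lambda>z. cz l i z * cz l i z) = V l i"
      unfolding sq V_def by (cases "i \<in> C") (simp_all add: E_c2(2)[OF l] del: Ypre.simps)
    have bound: "V l i \<le> B l i i"
    proof (cases "i \<in> C")
      case False then show ?thesis using pp_nonneg[of i] l by (simp add: V_def B_def)
    next
      case True
      have pi: "0 < p i" using ppos[OF True] .
      have t: "0 < p i * l" using pi l by simp
      have et: "p i * l \<le> exp (p i * l) - 1" using exp_ge_add_one_self[of "p i * l"] by linarith
      have "(p i)\<^sup>2 / (exp (p i * l) - 1) \<le> (p i)\<^sup>2 / (p i * l)"
        using t et by (intro divide_left_mono) (auto intro: mult_pos_pos)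
      also have "\<dots> = p i / l" using pi by (simp add: power2_eq_square)
      finally have h: "(p i)\<^sup>2 / (exp (p i * l) - 1) \<le> p i / l" .
      have pr: "prPhi0 C p \<phi> l i \<le> 1" "0 \<le> prPhi0 C p \<phi> l i" using prPhi0_le1[OF l] by auto
      have nn: "0 \<le> (p i)\<^sup>2 / (exp (p i * l) - 1)" using t by simp
      have "V l i \<le> 1 * ((p i)\<^sup>2 / (exp (p i * l) - 1))"
        unfolding V_def using True mult_right_mono[OF pr(1) nn] by simp
      also have "\<dots> \<le> p i / l" using h by simp
      also have "\<dots> \<le> B l i i" using True pi l by (simp add: B_def pp_def)
      finally show ?thesis .
    qed
    show ?thesis using int val bound by simp
  qed
  have all: "integrable (M l) (\<lambda>z. cz l i z * cz l j z) \<and> integrable (M l) (\<lambda>z. \<bar>cz l i z * cz l j z\<bar>)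
    \<and> integral\<^sup>L (M l) (\<lambda>z. cz l i z * cz l j z) = (if j = i then V l i else 0)
    \<and> integral\<^sup>L (M l) (\<lambda>z. \<bar>cz l i z * cz l j z\<bar>) \<le> B l i j"
  proof (cases "i < j")
    case True then show ?thesis using gen by blast
  next
    case False
    show ?thesis
    proof (cases "j < i")
      case True
      have c: "(\<lambda>z. cz l i z * cz l j z) = (\<lambda>z. cz l j z * cz l i z)" by (simp add: mult.commute)
      have c2: "(\<lambda>z. \<bar>cz l i z * cz l j z\<bar>) = (\<lambda>z. \<bar>cz l j z * cz l i z\<bar>)" by (simp add: mult.commute)
      have b: "B l j i = B l i j" using True by (simp add: B_def mult.commute mult.left_commute)
      show ?thesis unfolding c c2 using gen[OF True] True b by auto
    next
      case False
      then have "i = j" using \<open>\<not> i < j\<close> by simp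
      then show ?thesis using diag by simp
    qed
  qed
  then show "integrable (M l) (\<lambda>z. cz l i z * cz l j z)"
    and "integrable (M l) (\<lambda>z. \<bar>cz l i z * cz l j z\<bar>)"
    and "integral\<^sup>L (M l) (\<lambda>z. cz l i z * cz l j z) = (if j = i then V l i else 0)"
    and "integral\<^sup>L (M l) (\<lambda>z. \<bar>cz l i z * cz l j z\<bar>) \<le> B l i j" by auto
qed

lemma B_sums: "0 < l \<Longrightarrow> B l i sums (pp i * (4 + 1 / l))"
proof -
  assume l: "0 < l"
  have "(\<lambda>j. 4 * pp i * pp j + (if j = i then pp j / l else 0)) sums (4 * pp i * 1 + pp i / l)"
    by (intro sums_add sums_mult pp_sums sums_single)
  moreover have "B l i = (\<lambda>j. 4 * pp i * pp j + (if j = i then pp j / l else 0))"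
    by (rule ext) (simp add: B_def)
  ultimately show ?thesis by (simp add: algebra_simps)
qed

lemma B_nonneg: "0 < l \<Longrightarrow> 0 \<le> B l i j"
  using pp_nonneg[of i] pp_nonneg[of j] by (simp add: B_def)

end


context dart begin

lemma cz_integrable: "0 < l \<Longrightarrow> integrable (M l) (cz l i)"
proof -
  assume l: "0 < l"
  show ?thesis
  proof (cases "i \<in> C")
    case True
    have "integrable (M l) (\<lambda>z. cf l i (Ypre \<phi> z (Suc i)))"
      by (rule integral_prefix(1)[OF l Ok_Suc[OF True]])
    then show ?thesis using True unfolding cz_def by simp
  next
    case False then show ?thesis unfolding cz_def by simp
  qed
qed

lemma cz_meas[measurable]: "0 < l \<Longrightarrow> cz l i \<in> borel_measurable (M l)"
  by (rule borel_measurable_integrable[OF cz_integrable])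

definition Sf :: "real \<Rightarrow> (nat \<Rightarrow> nat) \<Rightarrow> real" where "Sf l z = (\<Sum>i. cz l i z)"

lemma Sf_meas: "0 < l \<Longrightarrow> Sf l \<in> borel_measurable (M l)"
  unfolding Sf_def[abs_def] by (intro borel_measurable_suminf cz_meas)

lemma cz_cy: "good (Ystate C \<phi> z) \<Longrightarrow> cz l i z = cy l (Ystate C \<phi> z) i"
  unfolding cz_def cy_def using yl_Ystate[OF Ok_Suc, of i z] by auto

lemma AE_cz:
  assumes l: "0 < l"
  shows "AE z in M l. summable (\<lambda>i. \<bar>cz l i z\<bar>) \<and> summable (\<lambda>i. cz l i z) \<and> Sf l z = sc l (Ystate C \<phi> z)"
  using AE_good[OF l]
proof (eventually_elim)
  case (elim z)
  have e: "(\<lambda>i. cz l i z) = cy l (Ystate C \<phi> z)" by (rule ext) (rule cz_cy[OF elim])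
  have a: "summable (\<lambda>i. \<bar>cz l i z\<bar>)" using cy_abs_summable[OF elim, of l] by (simp add: cz_cy[OF elim])
  show ?case using a summable_rabs_cancel[OF a] cy_sums[OF elim, of l] unfolding Sf_def e
    by (simp add: sums_iff)
qed

lemma stepA:
  assumes l: "0 < l"
  shows "integrable (M l) (\<lambda>z. cz l i z * Sf l z)"
    and "integral\<^sup>L (M l) (\<lambda>z. cz l i z * Sf l z) = V l i"
    and "integral\<^sup>L (M l) (\<lambda>z. \<bar>cz l i z * Sf l z\<bar>) \<le> pp i * (4 + 1 / l)"
proof -
  have Bs: "summable (B l i)" using B_sums[OF l] by (simp add: sums_iff)
  have Bsum: "suminf (B l i) = pp i * (4 + 1 / l)" using B_sums[OF l] by (simp add: sums_iff)
  have AEs: "AE z in M l. summable (\<lambda>j. norm (cz l i z * cz l j z))"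
    using AE_cz[OF l]
  proof (eventually_elim)
    case (elim z)
    then have "summable (\<lambda>j. \<bar>cz l i z\<bar> * \<bar>cz l j z\<bar>)" by (intro summable_mult) simp
    then show ?case by (simp add: abs_mult)
  qed
  have ints: "summable (\<lambda>j. integral\<^sup>L (M l) (\<lambda>z. norm (cz l i z * cz l j z)))"
  proof (rule summable_comparison_test[OF _ Bs])
    show "\<exists>N. \<forall>n\<ge>N. norm (integral\<^sup>L (M l) (\<lambda>z. norm (cz l i z * cz l n z))) \<le> B l i n"
      using cz_prod_int(4)[OF l] by (auto simp: integral_nonneg_AE)
  qed
  have I1: "integrable (M l) (\<lambda>z. \<Sum>j. cz l i z * cz l j z)"
    by (rule integrable_suminf[OF cz_prod_int(1)[OF l] AEs ints])
  have I2: "integral\<^sup>L (M l) (\<lambda>z. \<Sum>j. cz l i z * cz l j z) = (\<Sum>j. integral\<^sup>L (M l) (\<lambda>z. cz l i z * cz l j z))"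
    by (rule integral_suminf[OF cz_prod_int(1)[OF l] AEs ints])
  have I3: "(\<Sum>j. integral\<^sup>L (M l) (\<lambda>z. cz l i z * cz l j z)) = V l i"
  proof -
    have "(\<lambda>j. integral\<^sup>L (M l) (\<lambda>z. cz l i z * cz l j z)) = (\<lambda>j. if j = i then V l j else 0)"
      by (rule ext) (simp add: cz_prod_int(3)[OF l])
    then show ?thesis using sums_single[of i "V l"] by (simp add: sums_iff)
  qed
  have AEeq: "AE z in M l. (\<Sum>j. cz l i z * cz l j z) = cz l i z * Sf l z"
    using AE_cz[OF l] by (eventually_elim) (simp add: Sf_def suminf_mult)
  have meas: "(\<lambda>z. cz l i z * Sf l z) \<in> borel_measurable (M l)"
    using cz_meas[OF l] Sf_meas[OF l] by measurable
  show int: "integrable (M l) (\<lambda>z. cz l i z * Sf l z)"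
    by (rule integrable_cong_AE_imp[OF I1 meas AEeq])
  have "integral\<^sup>L (M l) (\<lambda>z. cz l i z * Sf l z) = integral\<^sup>L (M l) (\<lambda>z. \<Sum>j. cz l i z * cz l j z)"
    by (rule integral_cong_AE[OF meas borel_measurable_integrable[OF I1]]) (use AEeq in \<open>auto elim: eventually_mono\<close>)
  then show "integral\<^sup>L (M l) (\<lambda>z. cz l i z * Sf l z) = V l i" using I2 I3 by simp
  have AEs': "AE z in M l. summable (\<lambda>j. norm \<bar>cz l i z * cz l j z\<bar>)"
    using AEs by simp
  have ints': "summable (\<lambda>j. integral\<^sup>L (M l) (\<lambda>z. norm \<bar>cz l i z * cz l j z\<bar>))"
    using ints by simp
  have G1: "integrable (M l) (\<lambda>z. \<Sum>j. \<bar>cz l i z * cz l j z\<bar>)"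
    by (rule integrable_suminf[OF cz_prod_int(2)[OF l] AEs' ints'])
  have G2: "integral\<^sup>L (M l) (\<lambda>z. \<Sum>j. \<bar>cz l i z * cz l j z\<bar>) = (\<Sum>j. integral\<^sup>L (M l) (\<lambda>z. \<bar>cz l i z * cz l j z\<bar>))"
    by (rule integral_suminf[OF cz_prod_int(2)[OF l] AEs' ints'])
  have G3: "(\<Sum>j. integral\<^sup>L (M l) (\<lambda>z. \<bar>cz l i z * cz l j z\<bar>)) \<le> suminf (B l i)"
  proof (rule suminf_le)
    show "summable (\<lambda>j. integral\<^sup>L (M l) (\<lambda>z. \<bar>cz l i z * cz l j z\<bar>))" using ints by simp
  qed (use cz_prod_int(4)[OF l] Bs in auto)
  have "integral\<^sup>L (M l) (\<lambda>z. \<bar>cz l i z * Sf l z\<bar>) \<le> integral\<^sup>L (M l) (\<lambda>z. \<Sum>j. \<bar>cz l i z * cz l j z\<bar>)"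
  proof (rule integral_mono_AE'[OF G1])
    show "AE z in M l. \<bar>cz l i z * Sf l z\<bar> \<le> (\<Sum>j. \<bar>cz l i z * cz l j z\<bar>)"
      using AE_cz[OF l]
    proof (eventually_elim)
      case (elim z)
      have "\<bar>cz l i z * Sf l z\<bar> = \<bar>cz l i z\<bar> * \<bar>\<Sum>j. cz l j z\<bar>" by (simp add: Sf_def abs_mult)
      also have "\<dots> \<le> \<bar>cz l i z\<bar> * (\<Sum>j. \<bar>cz l j z\<bar>)"
        using elim by (intro mult_left_mono summable_rabs) auto
      also have "\<dots> = (\<Sum>j. \<bar>cz l i z * cz l j z\<bar>)"
        using elim by (simp add: suminf_mult abs_mult)
      finally show ?case .
    qed
    show "AE z in M l. 0 \<le> (\<Sum>j. \<bar>cz l i z * cz l j z\<bar>)"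
      using AEs by (eventually_elim) (auto intro: suminf_nonneg)
  qed
  then show "integral\<^sup>L (M l) (\<lambda>z. \<bar>cz l i z * Sf l z\<bar>) \<le> pp i * (4 + 1 / l)"
    using G2 G3 Bsum by simp
qed

lemma stepB:
  assumes l: "0 < l"
  shows "integrable (M l) (\<lambda>z. (Sf l z)\<^sup>2)"
    and "integral\<^sup>L (M l) (\<lambda>z. (Sf l z)\<^sup>2) = (\<Sum>i. V l i)"
    and "summable (V l)"
proof -
  have AEs: "AE z in M l. summable (\<lambda>i. norm (cz l i z * Sf l z))"
    using AE_cz[OF l]
  proof (eventually_elim)
    case (elim z)
    then have "summable (\<lambda>i. \<bar>cz l i z\<bar> * \<bar>Sf l z\<bar>)" by (intro summable_mult2) simp
    then show ?case by (simp add: abs_mult)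
  qed
  have ps: "summable (\<lambda>i. pp i * (4 + 1 / l))" by (intro summable_mult2 pp_summable)
  have ints: "summable (\<lambda>i. integral\<^sup>L (M l) (\<lambda>z. norm (cz l i z * Sf l z)))"
  proof (rule summable_comparison_test[OF _ ps])
    show "\<exists>N. \<forall>n\<ge>N. norm (integral\<^sup>L (M l) (\<lambda>z. norm (cz l n z * Sf l z))) \<le> pp n * (4 + 1 / l)"
      using stepA(3)[OF l] by (auto simp: integral_nonneg_AE)
  qed
  have I1: "integrable (M l) (\<lambda>z. \<Sum>i. cz l i z * Sf l z)"
    by (rule integrable_suminf[OF stepA(1)[OF l] AEs ints])
  have I2: "integral\<^sup>L (M l) (\<lambda>z. \<Sum>i. cz l i z * Sf l z) = (\<Sum>i. integral\<^sup>L (M l) (\<lambda>z. cz l i z * Sf l z))"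
    by (rule integral_suminf[OF stepA(1)[OF l] AEs ints])
  have I3: "summable (\<lambda>i. integral\<^sup>L (M l) (\<lambda>z. cz l i z * Sf l z))"
    by (rule summable_integral[OF stepA(1)[OF l] AEs ints])
  have AEeq: "AE z in M l. (\<Sum>i. cz l i z * Sf l z) = (Sf l z)\<^sup>2"
    using AE_cz[OF l] by (eventually_elim) (simp add: Sf_def suminf_mult2[symmetric] power2_eq_square)
  have meas: "(\<lambda>z. (Sf l z)\<^sup>2) \<in> borel_measurable (M l)"
    using Sf_meas[OF l] by measurable
  show "integrable (M l) (\<lambda>z. (Sf l z)\<^sup>2)"
    by (rule integrable_cong_AE_imp[OF I1 meas AEeq])
  have "integral\<^sup>L (M l) (\<lambda>z. (Sf l z)\<^sup>2) = integral\<^sup>L (M l) (\<lambda>z. \<Sum>i. cz l i z * Sf l z)"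
    by (rule integral_cong_AE[OF meas borel_measurable_integrable[OF I1]]) (use AEeq in \<open>auto elim: eventually_mono\<close>)
  then show "integral\<^sup>L (M l) (\<lambda>z. (Sf l z)\<^sup>2) = (\<Sum>i. V l i)" using I2 stepA(2)[OF l] by simp
  show "summable (V l)" using I3 stepA(2)[OF l] by simp
qed

end


context dart begin

lemma V_nonneg: "0 < l \<Longrightarrow> 0 \<le> V l i"
proof -
  assume l: "0 < l"
  show ?thesis
  proof (cases "i \<in> C")
    case True
    have t: "0 < p i * l" using ppos[OF True] l by simp
    then have nn: "0 \<le> (p i)\<^sup>2 / (exp (p i * l) - 1)" by simp
    show ?thesis unfolding V_def using True mult_nonneg_nonneg[OF prPhi0_le1(2)[OF l, of i] nn] by simp
  qed (simp add: V_def)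
qed

lemma fisher_part:
  assumes l: "0 < l"
  shows "ennreal (l\<^sup>2) * fisherY C p \<phi> l = (\<Sum>\<^sub>\<infinity>i\<in>C. ennreal (Idot (p i * l) * prPhi0 C p \<phi> l i))"
proof -
  interpret P: prob_space "M l" by (rule prob_M)
  let ?P = "\<lambda>y. Ypmf C p \<phi> l y"
  have S: "{y. 0 < ?P y} = {y. good y}" using Ypmf_pos_iff[OF l] by auto
  have "ennreal (l\<^sup>2) * fisherY C p \<phi> l
      = ennreal (l\<^sup>2) * (\<Sum>\<^sub>\<infinity>y\<in>{y. good y}. ennreal ((deriv (\<lambda>x. Ypmf C p \<phi> x y) l)\<^sup>2 / ?P y))"
    unfolding fisherY_def S ..
  also have "\<dots> = ennreal (l\<^sup>2) * (\<integral>\<^sup>+y. ennreal ((deriv (\<lambda>x. Ypmf C p \<phi> x y) l)\<^sup>2 / ?P y) \<partial>count_space {y. good y})"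
    by (simp add: infsum_ennreal_nn[OF countable_good])
  also have "\<dots> = (\<integral>\<^sup>+y. ennreal (l\<^sup>2) * ennreal ((deriv (\<lambda>x. Ypmf C p \<phi> x y) l)\<^sup>2 / ?P y) \<partial>count_space {y. good y})"
    by (rule nn_integral_cmult[symmetric]) simp
  also have "\<dots> = (\<integral>\<^sup>+y. ennreal (?P y) * ennreal (l\<^sup>2 * (sc l y)\<^sup>2) \<partial>count_space {y. good y})"
  proof (rule nn_integral_cong)
    fix y assume "y \<in> space (count_space {y. good y})"
    then have g: "good y" by simp
    have pos: "0 < ?P y" using g S by auto
    have "(deriv (\<lambda>x. Ypmf C p \<phi> x y) l)\<^sup>2 / ?P y = ?P y * (sc l y)\<^sup>2"
      using pos by (simp add: deriv_Ypmf[OF l g] power2_eq_square)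
    then show "ennreal (l\<^sup>2) * ennreal ((deriv (\<lambda>x. Ypmf C p \<phi> x y) l)\<^sup>2 / ?P y) = ennreal (?P y) * ennreal (l\<^sup>2 * (sc l y)\<^sup>2)"
      using pos by (simp add: ennreal_mult[symmetric] mult_ac)
  qed
  also have "\<dots> = (\<integral>\<^sup>+z. ennreal (l\<^sup>2 * (sc l (Ystate C \<phi> z))\<^sup>2) \<partial>M l)"
    by (rule conversion[OF l])
  also have "\<dots> = (\<integral>\<^sup>+z. ennreal (l\<^sup>2 * (Sf l z)\<^sup>2) \<partial>M l)"
    by (rule nn_integral_cong_AE, rule eventually_mono[OF AE_cz[OF l]]) simp
  also have "\<dots> = ennreal (integral\<^sup>L (M l) (\<lambda>z. l\<^sup>2 * (Sf l z)\<^sup>2))"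
    by (rule nn_integral_eq_integral) (use stepB(1)[OF l] in auto)
  also have "integral\<^sup>L (M l) (\<lambda>z. l\<^sup>2 * (Sf l z)\<^sup>2) = (\<Sum>i. l\<^sup>2 * V l i)"
    using stepB(2,3)[OF l] by (simp add: suminf_mult)
  also have "ennreal (\<Sum>i. l\<^sup>2 * V l i) = (\<Sum>i. ennreal (l\<^sup>2 * V l i))"
    by (rule suminf_ennreal2[symmetric]) (use V_nonneg[OF l] stepB(3)[OF l] in \<open>auto intro: summable_mult\<close>)
  also have "\<dots> = (\<Sum>i. if i \<in> C then ennreal (Idot (p i * l) * prPhi0 C p \<phi> l i) else 0)"
  proof (rule suminf_cong)
    fix i
    show "ennreal (l\<^sup>2 * V l i) = (if i \<in> C then ennreal (Idot (p i * l) * prPhi0 C p \<phi> l i) else 0)"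
      by (simp add: V_def Idot_def power_mult_distrib field_simps)
  qed
  also have "\<dots> = (\<Sum>\<^sub>\<infinity>i\<in>C. ennreal (Idot (p i * l) * prPhi0 C p \<phi> l i))"
    unfolding infsum_nat_ennreal by (intro suminf_cong) simp
  finally show ?thesis .
qed

end

theorem mainTheorem11:
  fixes C :: "nat set" and p :: "nat \<Rightarrow> real" and \<phi> :: "bool list \<Rightarrow> bool" and lam :: real
  assumes "dartboard C p" and "mono_sketch \<phi>" and "0 < lam"
  shows "entropyY C p \<phi> lam = (\<Sum>\<^sub>\<infinity>i\<in>C. ennreal (Hdot (p i * lam) * prPhi0 C p \<phi> lam i))
       \<and> ennreal (lam\<^sup>2) * fisherY C p \<phi> lam = (\<Sum>\<^sub>\<infinity>i\<in>C. ennreal (Idot (p i * lam) * prPhi0 C p \<phi> lam i))"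
proof -
  interpret dart C p \<phi> by unfold_locales (rule assms(1))
  show ?thesis using entropy_part[OF assms(3)] fisher_part[OF assms(3)] by simp
qed


end
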